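(* Let $G=(V,E)$ be a finite graph with couplings $J=(J_e)_{e\in E}$, $J_e>0$. Let $\Omega=\{0,1\}^E$, $\Sigma=\{-1,+1\}^V$, and $f:\Omega\to2^\Sigma$, $f(\omega)=\{\sigma\in\Sigma\mid \omega\subset S(\sigma)\}$ (so $|f(\omega)|=2^{\kappa(\omega)}$). Let $A,B\subset V$ with $|A|,|B|$ even, and let $$\rho[\omega]\propto \mathbf{P}^{A\triangle B}_{G,2J}[\omega\mid\mathcal{F}_A]\ (\omega\in\Omega),\qquad \gamma[\sigma]\propto1\ (\sigma\in\Sigma).$$ Let $\mathscr{P}$ be the probability measure on $\Omega\times\Sigma$ with $\mathscr{P}[\omega,\sigma]\propto\rho[\omega]\gamma[\sigma]\mathbf{1}[\sigma\in f(\omega)]$. Then: (a) The marginal of $\mathscr{P}$ on $\Sigma$ is the measure $\mu^{A,B}$ given by $$\mu^{A,B}[\sigma]\propto \langle\tau_{A\triangle B}\rangle_{S(\sigma),2J}\;\mathbf{P}^{A\triangle B}_{S(\sigma),2J}[\mathcal{F}_A]\;\mu^{\mathrm{XOR}}[\sigma].$$ For each $\omega\in\mathcal{F}_A\cap\mathcal{F}_B$, the conditional measure $\mathscr{P}[\cdot\mid\omega]$ on $\Sigma$ is obtained by assigning independent uniform signs $\pm1$ to the open clusters of $\omega$ (all vertices of a cluster receiving the same sign). (b) The marginal of $\mathscr{P}$ on $\Omega$ is the double random current $\mathbf{P}^{A,B}_{G,J}$. For each $\sigma\in\Sigma$ with $\mu^{A,B}[\sigma]\neq0$, the conditional measure $\mathscr{P}[\cdot\mid\sigma]$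 is $\mathbf{P}^{A\triangle B}_{S(\sigma),2J}[\cdot\mid\mathcal{F}_A]$, the single random current on $S(\sigma)$ with sources $A\triangle B$ and couplings $(2J_e)$, conditioned on $\mathcal{F}_A$.
   Context: Configurations $\omega\in\{0,1\}^E$ are identified with their sets of open edges and with spanning subgraphs $(V,\omega)$; $\kappa(\omega)$ is the number of connected components of $(V,\omega)$ (isolated vertices included). For $\sigma\in\{\pm1\}^V$, $S(\sigma)=\{uv\in E\mid \sigma_u=\sigma_v\}$. For $F\subset E$, $\partial F$ is the set of vertices of odd degree in $(V,F)$. For $A\subset V$, $\mathcal{F}_A=\{\omega\subset E\mid \exists F\subset\omega,\ \partial F=A\}$. For a set of edges $H\subset E$ and couplings $K=(K_e)$: the Ising measure on $(V,H)$ is $\mu_{H,K}[\tau]\propto\exp(\sum_{uv\in H}K_{uv}\tau_u\tau_v)$ on $\{\pm1\}^V$, with partition function $Z_{H,K}$, and $\langle\tau_C\rangle_{H,K}$ is the expectation of $\prod_{x\in C}\tau_x$ under it. The single random current $\mathbf{P}^C_{H,K}$ with sources $C$ is the law of $\{e: n_e>0\}\subset E$, where $(n_e)_{e\in H}$ are independent Poisson$(K_e)$ variables ($n_e=0$ for $e\notin H$) conditioned on the set of vertices $v$ with $\sum_{e\ni v}n_e$ odd being $C$. The double random current is $\mathbf{P}^{A,B}_{G,J}=$ law of the union of independent samples of $\mathbf{P}^A_{G,J}$ and $\mathbf{P}^B_{G,J}$ (where $\mathbf{P}^C_{G,J}=\mathbf{P}^C_{E,J}$). $\mu^{\mathrm{XOR}}$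 is the law of the pointwise product $\sigma^1\sigma^2$ of two independent samples of the Ising measure $\mu_{E,J}$ on $G$. *)

theory Defs
  imports "HOL-Analysis.Analysis" "HOL-Library.FuncSet"
begin

text \<open>Graph conventions: a finite vertex set V :: 'v set; edges are two-element
subsets of V (E :: 'v set set); configurations omega are subsets of E;
spin configurations are functions 'v => real, equal to +1 or -1 on V and
(by convention, to make the set of spins finite) equal to 1 outside V.\<close>

definition symdiff :: "'v set \<Rightarrow> 'v set \<Rightarrow> 'v set" where
  "symdiff A B = (A - B) \<union> (B - A)"

definition spins :: "'v set \<Rightarrow> ('v \<Rightarrow> real) set" where
  "spins V = {\<sigma>. (\<forall>v\<in>V. \<sigma> v = 1 \<or> \<sigma> v = -1) \<and> (\<forall>v. v \<notin> V \<longrightarrow> \<sigma> v = 1)}"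

definition agree_edges :: "'v set set \<Rightarrow> ('v \<Rightarrow> real) \<Rightarrow> 'v set set" where
  "agree_edges E \<sigma> = {e\<in>E. \<exists>u v. e = {u, v} \<and> \<sigma> u = \<sigma> v}"

definition bdry :: "'v set \<Rightarrow> 'v set set \<Rightarrow> 'v set" where
  "bdry V F = {v\<in>V. odd (card {e\<in>F. v \<in> e})}"

definition FA :: "'v set \<Rightarrow> 'v set set \<Rightarrow> 'v set \<Rightarrow> 'v set set set" where
  "FA V E A = {\<omega>. \<omega> \<subseteq> E \<and> (\<exists>F\<subseteq>\<omega>. bdry V F = A)}"

definition conn :: "'v set \<Rightarrow> 'v set set \<Rightarrow> ('v \<times> 'v) set" where
  "conn V \<omega> = ({(u, v). {u, v} \<in> \<omega>})\<^sup>* \<inter> (V \<times> V)"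

definition clusters :: "'v set \<Rightarrow> 'v set set \<Rightarrow> 'v set set" where
  "clusters V \<omega> = V // conn V \<omega>"

definition kappa :: "'v set \<Rightarrow> 'v set set \<Rightarrow> nat" where
  "kappa V \<omega> = card (clusters V \<omega>)"

definition fmap :: "'v set \<Rightarrow> 'v set set \<Rightarrow> 'v set set \<Rightarrow> ('v \<Rightarrow> real) set" where
  "fmap V E \<omega> = {\<sigma>\<in>spins V. \<omega> \<subseteq> agree_edges E \<sigma>}"

definition ising_weight :: "'v set set \<Rightarrow> ('v set \<Rightarrow> real) \<Rightarrow> ('v \<Rightarrow> real) \<Rightarrow> real" where
  "ising_weight H K \<tau> = exp (\<Sum>e\<in>H. K e * (\<Prod>x\<in>e. \<tau> x))"

definition ising_Z :: "'v set \<Rightarrow> 'v set set \<Rightarrow> ('v set \<Rightarrow> real) \<Rightarrow> real" where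
  "ising_Z V H K = (\<Sum>\<tau>\<in>spins V. ising_weight H K \<tau>)"

definition ising_mu :: "'v set \<Rightarrow> 'v set set \<Rightarrow> ('v set \<Rightarrow> real) \<Rightarrow> ('v \<Rightarrow> real) \<Rightarrow> real" where
  "ising_mu V H K \<tau> = ising_weight H K \<tau> / ising_Z V H K"

definition ising_corr :: "'v set \<Rightarrow> 'v set set \<Rightarrow> ('v set \<Rightarrow> real) \<Rightarrow> 'v set \<Rightarrow> real" where
  "ising_corr V H K C = (\<Sum>\<tau>\<in>spins V. (\<Prod>x\<in>C. \<tau> x) * ising_mu V H K \<tau>)"

definition mu_xor :: "'v set \<Rightarrow> 'v set set \<Rightarrow> ('v set \<Rightarrow> real) \<Rightarrow> ('v \<Rightarrow> real) \<Rightarrow> real" where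
  "mu_xor V E J \<sigma> = (\<Sum>p\<in>{p\<in>spins V \<times> spins V. (\<lambda>v. fst p v * snd p v) = \<sigma>}.
                        ising_mu V E J (fst p) * ising_mu V E J (snd p))"

definition currents :: "'v set \<Rightarrow> 'v set set \<Rightarrow> 'v set \<Rightarrow> ('v set \<Rightarrow> nat) set" where
  "currents V H C = {n. (\<forall>e. e \<notin> H \<longrightarrow> n e = 0) \<and>
                         {v\<in>V. odd (\<Sum>e\<in>{e\<in>H. v \<in> e}. n e)} = C}"

definition poisson_weight :: "'v set set \<Rightarrow> ('v set \<Rightarrow> real) \<Rightarrow> ('v set \<Rightarrow> nat) \<Rightarrow> real" where
  "poisson_weight H K n = (\<Prod>e\<in>H. exp (- K e) * K e ^ n e / fact (n e))"

definition rc_prob :: "'v set \<Rightarrow> 'v set set \<Rightarrow> ('v set \<Rightarrow> real) \<Rightarrow> 'v set \<Rightarrow> 'v set set \<Rightarrow> real" where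
  "rc_prob V H K C \<omega> =
     (\<Sum>\<^sub>\<infinity>n\<in>{n\<in>currents V H C. {e. n e > 0} = \<omega>}. poisson_weight H K n)
     / (\<Sum>\<^sub>\<infinity>n\<in>currents V H C. poisson_weight H K n)"

definition rc_event :: "'v set \<Rightarrow> 'v set set \<Rightarrow> 'v set set \<Rightarrow> ('v set \<Rightarrow> real) \<Rightarrow> 'v set
                         \<Rightarrow> 'v set set set \<Rightarrow> real" where
  "rc_event V E H K C X = (\<Sum>\<omega>\<in>Pow E \<inter> X. rc_prob V H K C \<omega>)"

definition rc_cond :: "'v set \<Rightarrow> 'v set set \<Rightarrow> 'v set set \<Rightarrow> ('v set \<Rightarrow> real) \<Rightarrow> 'v set
                         \<Rightarrow> 'v set set set \<Rightarrow> 'v set set \<Rightarrow> real" where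
  "rc_cond V E H K C X \<omega> =
     (if \<omega> \<in> X then rc_prob V H K C \<omega> else 0) / rc_event V E H K C X"

definition drc_prob :: "'v set \<Rightarrow> 'v set set \<Rightarrow> ('v set \<Rightarrow> real) \<Rightarrow> 'v set \<Rightarrow> 'v set
                         \<Rightarrow> 'v set set \<Rightarrow> real" where
  "drc_prob V E J A B \<omega> =
     (\<Sum>p\<in>{p\<in>Pow E \<times> Pow E. fst p \<union> snd p = \<omega>}.
        rc_prob V E J A (fst p) * rc_prob V E J B (snd p))"

definition muAB_weight :: "'v set \<Rightarrow> 'v set set \<Rightarrow> ('v set \<Rightarrow> real) \<Rightarrow> 'v set \<Rightarrow> 'v set
                         \<Rightarrow> ('v \<Rightarrow> real) \<Rightarrow> real" where
  "muAB_weight V E J A B \<sigma> =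
     ising_corr V (agree_edges E \<sigma>) (\<lambda>e. 2 * J e) (symdiff A B)
     * rc_event V E (agree_edges E \<sigma>) (\<lambda>e. 2 * J e) (symdiff A B) (FA V E A)
     * mu_xor V E J \<sigma>"

definition muAB :: "'v set \<Rightarrow> 'v set set \<Rightarrow> ('v set \<Rightarrow> real) \<Rightarrow> 'v set \<Rightarrow> 'v set
                         \<Rightarrow> ('v \<Rightarrow> real) \<Rightarrow> real" where
  "muAB V E J A B \<sigma> = muAB_weight V E J A B \<sigma> / (\<Sum>\<sigma>'\<in>spins V. muAB_weight V E J A B \<sigma>')"

definition rho :: "'v set \<Rightarrow> 'v set set \<Rightarrow> ('v set \<Rightarrow> real) \<Rightarrow> 'v set \<Rightarrow> 'v set
                         \<Rightarrow> 'v set set \<Rightarrow> real" where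
  "rho V E J A B \<omega> =
     rc_cond V E E (\<lambda>e. 2 * J e) (symdiff A B) (FA V E A) \<omega>
     / (\<Sum>\<omega>'\<in>Pow E. rc_cond V E E (\<lambda>e. 2 * J e) (symdiff A B) (FA V E A) \<omega>')"

definition gamma_unif :: "'v set \<Rightarrow> ('v \<Rightarrow> real) \<Rightarrow> real" where
  "gamma_unif V \<sigma> = 1 / real (card (spins V))"

definition coupling_weight :: "'v set \<Rightarrow> 'v set set \<Rightarrow> ('v set \<Rightarrow> real) \<Rightarrow> 'v set \<Rightarrow> 'v set
                         \<Rightarrow> 'v set set \<Rightarrow> ('v \<Rightarrow> real) \<Rightarrow> real" where
  "coupling_weight V E J A B \<omega> \<sigma> =
     rho V E J A B \<omega> * gamma_unif V \<sigma> * (if \<sigma> \<in> fmap V E \<omega> then 1 else 0)"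

definition coupling :: "'v set \<Rightarrow> 'v set set \<Rightarrow> ('v set \<Rightarrow> real) \<Rightarrow> 'v set \<Rightarrow> 'v set
                         \<Rightarrow> 'v set set \<Rightarrow> ('v \<Rightarrow> real) \<Rightarrow> real" where
  "coupling V E J A B \<omega> \<sigma> = coupling_weight V E J A B \<omega> \<sigma>
     / (\<Sum>p\<in>Pow E \<times> spins V. coupling_weight V E J A B (fst p) (snd p))"

definition spread :: "'v set \<Rightarrow> 'v set set \<Rightarrow> ('v set \<Rightarrow> real) \<Rightarrow> 'v \<Rightarrow> real" where
  "spread V \<omega> s v = (if v \<in> V then s (conn V \<omega> `` {v}) else 1)"

definition cluster_sign_law :: "'v set \<Rightarrow> 'v set set \<Rightarrow> ('v \<Rightarrow> real) \<Rightarrow> real" where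
  "cluster_sign_law V \<omega> \<sigma> =
     real (card {s \<in> clusters V \<omega> \<rightarrow>\<^sub>E {-1, 1}. spread V \<omega> s = \<sigma>})
     / real (card (clusters V \<omega> \<rightarrow>\<^sub>E ({-1, 1} :: real set)))"

end

theory Submission
  imports Defs
begin


lemma has_sum_prod_PiE_nonneg:
  fixes f :: "'a \<Rightarrow> 'b \<Rightarrow> real"
  assumes "finite A"
    and "\<And>x. x \<in> A \<Longrightarrow> (f x has_sum s x) (B x)"
    and "\<And>x y. x \<in> A \<Longrightarrow> y \<in> B x \<Longrightarrow> f x y \<ge> 0"
  shows "((\<lambda>g. \<Prod>x\<in>A. f x (g x)) has_sum (\<Prod>x\<in>A. s x)) (PiE A B)"
  using assms
proof (induction A rule: finite_induct)
  case empty
  then show ?case by (simp add: has_sum_finite_iff)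
next
  case (insert x F)
  have IH: "((\<lambda>g. \<Prod>x\<in>F. f x (g x)) has_sum (\<Prod>x\<in>F. s x)) (PiE F B)"
    using insert by auto
  have bij: "bij_betw (\<lambda>(y, g). g(x := y)) (B x \<times> PiE F B) (PiE (insert x F) B)"
    unfolding bij_betw_def using inj_combinator[of x F B] insert.hyps by (simp add: PiE_insert_eq)
  have eq: "(\<Prod>z\<in>insert x F. f z ((g(x := y)) z)) = f x y * (\<Prod>z\<in>F. f z (g z))" for g y
  proof -
    have "(\<Prod>z\<in>F. f z ((g(x := y)) z)) = (\<Prod>z\<in>F. f z (g z))"
      using insert.hyps by (intro prod.cong) auto
    then show ?thesis using insert.hyps by simp
  qed
  have s1: "((\<lambda>g. f x y * (\<Prod>z\<in>F. f z (g z))) has_sum (f x y * (\<Prod>x\<in>F. s x))) (PiE F B)" for y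
    using has_sum_cmult_right[OF IH] by simp
  have s2: "((\<lambda>y. f x y * (\<Prod>x\<in>F. s x)) has_sum (s x * (\<Prod>x\<in>F. s x))) (B x)"
    using has_sum_cmult_left[OF insert.prems(1)[of x]] by simp
  have nn: "0 \<le> f x y * (\<Prod>z\<in>F. f z (g z))" if "y \<in> B x" "g \<in> PiE F B" for y g
    using insert.prems(2) that by (auto intro!: mult_nonneg_nonneg prod_nonneg)
  have summ: "(\<lambda>(y, g). f x y * (\<Prod>z\<in>F. f z (g z))) summable_on Sigma (B x) (\<lambda>_. PiE F B)"
    by (rule summable_on_SigmaI[where g = "\<lambda>y. f x y * (\<Prod>x\<in>F. s x)"])
       (use s1 s2 nn in \<open>auto simp: summable_on_def\<close>)
  have "((\<lambda>(y, g). f x y * (\<Prod>z\<in>F. f z (g z))) has_sum (s x * (\<Prod>x\<in>F. s x))) (B x \<times> PiE F B)"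
    by (rule has_sum_SigmaI[where g = "\<lambda>y. f x y * (\<Prod>x\<in>F. s x)"]) (use s1 s2 summ in auto)
  moreover have fe: "(\<lambda>p. (\<lambda>g. \<Prod>z\<in>insert x F. f z (g z)) ((\<lambda>(y, g). g(x := y)) p))
      = (\<lambda>(y, g). f x y * (\<Prod>z\<in>F. f z (g z)))"
  proof (rule ext)
    fix p show "(\<lambda>g. \<Prod>z\<in>insert x F. f z (g z)) ((\<lambda>(y, g). g(x := y)) p) = (\<lambda>(y, g). f x y * (\<Prod>z\<in>F. f z (g z))) p"
      by (cases p) (simp only: case_prod_conv eq)
  qed
  ultimately have "((\<lambda>p. (\<lambda>g. \<Prod>z\<in>insert x F. f z (g z)) ((\<lambda>(y, g). g(x := y)) p)) has_sum (s x * (\<Prod>x\<in>F. s x))) (B x \<times> PiE F B)"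
    by (simp only: fe)
  then have "((\<lambda>g. \<Prod>z\<in>insert x F. f z (g z)) has_sum (s x * (\<Prod>x\<in>F. s x))) (PiE (insert x F) B)"
    using has_sum_reindex_bij_betw[OF bij] by blast
  then show ?case using insert.hyps by simp
qed

lemma sinh_has_sum:
  assumes "(x::real) \<ge> 0"
  shows "((\<lambda>n. x ^ n / fact n) has_sum sinh x) {n. odd n}"
proof -
  have "((\<lambda>n. if even n then 0 else x ^ n /\<^sub>R fact n) has_sum sinh x) UNIV"
    by (rule sums_nonneg_imp_has_sum[OF sinh_converges]) (use assms in auto)
  then show ?thesis
    by (rule has_sum_cong_neutral[THEN iffD1, rotated -1]) (auto simp: divide_inverse_commute)
qed

lemma cosh1_has_sum:
  assumes "(x::real) \<ge> 0"
  shows "((\<lambda>n. x ^ n / fact n) has_sum (cosh x - 1)) {n. even n \<and> n > 0}"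
proof -
  have "(\<lambda>n. (if even n then x ^ n /\<^sub>R fact n else 0) - (if n = 0 then 1 else 0)) sums (cosh x - 1)"
    using sums_diff[OF cosh_converges sums_single[of 0 "\<lambda>_. 1::real"]] by simp
  then have "((\<lambda>n. (if even n then x ^ n /\<^sub>R fact n else 0) - (if n = 0 then 1 else 0)) has_sum (cosh x - 1)) UNIV"
    by (rule sums_nonneg_imp_has_sum) (use assms in auto)
  then show ?thesis
    by (rule has_sum_cong_neutral[THEN iffD1, rotated -1]) (auto simp: divide_inverse_commute)
qed


lemma spins_val: "\<sigma> \<in> spins V \<Longrightarrow> \<sigma> x = 1 \<or> \<sigma> x = -1"
  unfolding spins_def by (cases "x \<in> V") auto

lemma spins_sq: "\<sigma> \<in> spins V \<Longrightarrow> \<sigma> x * \<sigma> x = 1"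
  using spins_val[of \<sigma> V x] by auto

lemma finite_spins: "finite V \<Longrightarrow> finite (spins V)"
proof -
  assume fV: "finite V"
  have sub: "spins V \<subseteq> {f. \<forall>x. (x \<in> V \<longrightarrow> f x \<in> {1, -1}) \<and> (x \<notin> V \<longrightarrow> f x = 1)}"
    unfolding spins_def by auto
  show ?thesis
    by (rule finite_subset[OF sub finite_set_of_finite_funs]) (use fV in auto)
qed

lemma one_spins: "(\<lambda>_. 1) \<in> spins V"
  unfolding spins_def by auto

lemma card_spins_pos: "finite V \<Longrightarrow> card (spins V) > 0"
  using one_spins[of V] finite_spins[of V] by (auto simp: card_gt_0_iff)

lemma prod_split_Int:
  assumes "finite C"
  shows "(\<Prod>x\<in>C. f x) = (\<Prod>x\<in>C - D. f x) * (\<Prod>x\<in>C \<inter> D. (f x :: real))"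
proof -
  have "(\<Prod>x\<in>(C - D) \<union> (C \<inter> D). f x) = (\<Prod>x\<in>C - D. f x) * (\<Prod>x\<in>C \<inter> D. f x)"
    by (rule prod.union_disjoint) (use assms in auto)
  moreover have "(C - D) \<union> (C \<inter> D) = C" by auto
  ultimately show ?thesis by simp
qed

lemma prod_symdiff:
  assumes "\<sigma> \<in> spins V" "finite C" "finite D"
  shows "(\<Prod>x\<in>C. \<sigma> x) * (\<Prod>x\<in>D. \<sigma> x) = (\<Prod>x\<in>symdiff C D. \<sigma> x)"
proof -
  have c: "(\<Prod>x\<in>C. \<sigma> x) = (\<Prod>x\<in>C - D. \<sigma> x) * (\<Prod>x\<in>C \<inter> D. \<sigma> x)"
    using prod_split_Int[OF assms(2)] .
  have d0: "(\<Prod>x\<in>D. \<sigma> x) = (\<Prod>x\<in>D - C. \<sigma> x) * (\<Prod>x\<in>D \<inter> C. \<sigma> x)"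
    using prod_split_Int[OF assms(3)] .
  have "D \<inter> C = C \<inter> D" by auto
  then have d: "(\<Prod>x\<in>D. \<sigma> x) = (\<Prod>x\<in>D - C. \<sigma> x) * (\<Prod>x\<in>C \<inter> D. \<sigma> x)"
    using d0 by simp
  have sq: "(\<Prod>x\<in>C \<inter> D. \<sigma> x) * (\<Prod>x\<in>C \<inter> D. \<sigma> x) = 1"
    by (simp add: prod.distrib[symmetric] spins_sq[OF assms(1)])
  have u: "(\<Prod>x\<in>symdiff C D. \<sigma> x) = (\<Prod>x\<in>C - D. \<sigma> x) * (\<Prod>x\<in>D - C. \<sigma> x)"
    unfolding symdiff_def using assms by (intro prod.union_disjoint) auto
  have "(\<Prod>x\<in>C. \<sigma> x) * (\<Prod>x\<in>D. \<sigma> x) = (\<Prod>x\<in>C - D. \<sigma> x) * (\<Prod>x\<in>D - C. \<sigma> x) *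
     ((\<Prod>x\<in>C \<inter> D. \<sigma> x) * (\<Prod>x\<in>C \<inter> D. \<sigma> x))"
    unfolding c d by (simp only: ac_simps)
  then show ?thesis using sq u by simp
qed


lemma char_sum:
  assumes "finite V" "D \<subseteq> V"
  shows "(\<Sum>\<sigma>\<in>spins V. \<Prod>x\<in>D. \<sigma> x) = (if D = {} then real (card (spins V)) else 0)"
proof (cases "D = {}")
  case True then show ?thesis by simp
next
  case False
  then obtain d where d: "d \<in> D" by auto
  have fD: "finite D" using assms finite_subset by blast
  define \<phi> where "\<phi> \<sigma> = \<sigma>(d := - \<sigma> d)" for \<sigma> :: "'a \<Rightarrow> real"
  have phiS: "\<phi> \<sigma> \<in> spins V" if "\<sigma> \<in> spins V" for \<sigma>
    using that d assms(2) unfolding \<phi>_def spins_def by auto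
  have inv: "\<phi> (\<phi> \<sigma>) = \<sigma>" for \<sigma> unfolding \<phi>_def by auto
  have bij: "bij_betw \<phi> (spins V) (spins V)"
    by (rule bij_betwI[where g = \<phi>]) (auto simp: phiS inv)
  have neg: "(\<Prod>x\<in>D. \<phi> \<sigma> x) = - (\<Prod>x\<in>D. \<sigma> x)" for \<sigma>
  proof -
    have a: "(\<Prod>x\<in>D. \<phi> \<sigma> x) = \<phi> \<sigma> d * (\<Prod>x\<in>D - {d}. \<phi> \<sigma> x)"
      using fD d by (rule prod.remove)
    have b: "(\<Prod>x\<in>D. \<sigma> x) = \<sigma> d * (\<Prod>x\<in>D - {d}. \<sigma> x)"
      using fD d by (rule prod.remove)
    have c: "(\<Prod>x\<in>D - {d}. \<phi> \<sigma> x) = (\<Prod>x\<in>D - {d}. \<sigma> x)"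
      unfolding \<phi>_def by (intro prod.cong) auto
    show ?thesis unfolding a b c by (simp add: \<phi>_def)
  qed
  have "(\<Sum>\<sigma>\<in>spins V. \<Prod>x\<in>D. \<sigma> x) = (\<Sum>\<sigma>\<in>spins V. \<Prod>x\<in>D. \<phi> \<sigma> x)"
    using sum.reindex_bij_betw[OF bij, of "\<lambda>\<sigma>. \<Prod>x\<in>D. \<sigma> x"] by simp
  also have "\<dots> = - (\<Sum>\<sigma>\<in>spins V. \<Prod>x\<in>D. \<sigma> x)"
    by (simp add: neg sum_negf)
  finally show ?thesis using False by simp
qed

lemma card_symdiff_parity:
  assumes "finite X" "finite Y"
  shows "odd (card ((X - Y) \<union> (Y - X))) \<longleftrightarrow> (odd (card X) \<noteq> odd (card Y))"
proof -
  have a: "card ((X - Y) \<union> (Y - X)) = card (X - Y) + card (Y - X)"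
    using assms by (intro card_Un_disjoint) auto
  have b: "card X = card (X - Y) + card (X \<inter> Y)"
  proof -
    have "card ((X - Y) \<union> (X \<inter> Y)) = card (X - Y) + card (X \<inter> Y)"
      using assms by (intro card_Un_disjoint) auto
    moreover have "(X - Y) \<union> (X \<inter> Y) = X" by auto
    ultimately show ?thesis by simp
  qed
  have c: "card Y = card (Y - X) + card (X \<inter> Y)"
  proof -
    have "card ((Y - X) \<union> (X \<inter> Y)) = card (Y - X) + card (X \<inter> Y)"
      using assms by (intro card_Un_disjoint) auto
    moreover have "(Y - X) \<union> (X \<inter> Y) = Y" by auto
    ultimately show ?thesis by simp
  qed
  show ?thesis unfolding a using b c by auto
qed

lemma bdry_symdiff:
  assumes "finite F1" "finite F2"
  shows "bdry V (symdiff F1 F2) = symdiff (bdry V F1) (bdry V F2)"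
proof -
  have key: "odd (card {e\<in>symdiff F1 F2. v \<in> e}) \<longleftrightarrow>
      (odd (card {e\<in>F1. v \<in> e}) \<noteq> odd (card {e\<in>F2. v \<in> e}))" for v
  proof -
    have "{e\<in>symdiff F1 F2. v \<in> e} = ({e\<in>F1. v \<in> e} - {e\<in>F2. v \<in> e}) \<union> ({e\<in>F2. v \<in> e} - {e\<in>F1. v \<in> e})"
      unfolding symdiff_def by auto
    then show ?thesis using card_symdiff_parity[of "{e\<in>F1. v \<in> e}" "{e\<in>F2. v \<in> e}"] assms by simp
  qed
  have bm: "v \<in> bdry V G \<longleftrightarrow> v \<in> V \<and> odd (card {e\<in>G. v \<in> e})" for v G
    by (simp add: bdry_def)
  have sm: "v \<in> symdiff X Y \<longleftrightarrow> (v \<in> X) \<noteq> (v \<in> Y)" for v and X Y :: "'a set"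
    by (auto simp: symdiff_def)
  show ?thesis
  proof (rule set_eqI)
    fix v
    show "v \<in> bdry V (symdiff F1 F2) \<longleftrightarrow> v \<in> symdiff (bdry V F1) (bdry V F2)"
      by (simp only: bm sm key) blast
  qed
qed

lemma symdiff_invol: "symdiff F (symdiff F X) = X"
  unfolding symdiff_def by auto

lemma symdiff_empty_iff: "symdiff C D = {} \<longleftrightarrow> C = D"
  unfolding symdiff_def by auto

lemma bdry_subset: "bdry V F \<subseteq> V"
  unfolding bdry_def by auto


locale gr =
  fixes V :: "'v set" and E :: "'v set set"
  assumes finV: "finite V" and edges: "\<forall>e\<in>E. e \<subseteq> V \<and> card e = 2"
begin

lemma finE: "finite E"
proof -
  have "E \<subseteq> Pow V" using edges by auto
  then show ?thesis using finV finite_subset by blast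
qed

lemma edge_pair: "e \<in> E \<Longrightarrow> \<exists>u v. e = {u, v} \<and> u \<noteq> v \<and> u \<in> V \<and> v \<in> V"
proof -
  assume "e \<in> E"
  then have "card e = 2" "e \<subseteq> V" using edges by auto
  then obtain u v where "e = {u, v}" "u \<noteq> v" by (auto simp: card_2_iff)
  then show ?thesis using \<open>e \<subseteq> V\<close> by auto
qed

lemma edge_val:
  assumes "e \<in> E" "\<sigma> \<in> spins V"
  shows "(\<Prod>x\<in>e. \<sigma> x) = (if e \<in> agree_edges E \<sigma> then 1 else -1)"
proof -
  obtain u v where e: "e = {u, v}" "u \<noteq> v" using edge_pair[OF assms(1)] by auto
  have ag: "e \<in> agree_edges E \<sigma> \<longleftrightarrow> \<sigma> u = \<sigma> v"
  proof
    assume "e \<in> agree_edges E \<sigma>"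
    then obtain u' v' where "e = {u', v'}" "\<sigma> u' = \<sigma> v'" unfolding agree_edges_def by auto
    then show "\<sigma> u = \<sigma> v" using e by (auto simp: doubleton_eq_iff)
  next
    assume "\<sigma> u = \<sigma> v"
    then show "e \<in> agree_edges E \<sigma>" unfolding agree_edges_def using assms(1) e by auto
  qed
  have p: "(\<Prod>x\<in>e. \<sigma> x) = \<sigma> u * \<sigma> v" using e by simp
  show ?thesis unfolding p using ag spins_val[OF assms(2), of u] spins_val[OF assms(2), of v] by auto
qed

lemma agree_sub: "agree_edges E \<sigma> \<subseteq> E"
  unfolding agree_edges_def by auto

lemma pow_odd: "(\<sigma> x = 1 \<or> \<sigma> x = -1) \<Longrightarrow> (\<sigma> x :: real) ^ n = (if odd n then \<sigma> x else 1)"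
  by (auto simp: power_minus')

lemma edge_prod_bdry:
  assumes "F \<subseteq> E" "\<sigma> \<in> spins V"
  shows "(\<Prod>e\<in>F. \<Prod>x\<in>e. \<sigma> x) = (\<Prod>x\<in>bdry V F. \<sigma> x)"
proof -
  have fF: "finite F" using assms finE finite_subset by blast
  have "(\<Prod>e\<in>F. \<Prod>x\<in>e. \<sigma> x) = (\<Prod>e\<in>F. \<Prod>x\<in>{x\<in>V. x \<in> e}. \<sigma> x)"
  proof (rule prod.cong[OF refl])
    fix e assume "e \<in> F"
    then have "e \<subseteq> V" using assms edges by auto
    then have "{x\<in>V. x \<in> e} = e" by auto
    then show "(\<Prod>x\<in>e. \<sigma> x) = (\<Prod>x\<in>{x\<in>V. x \<in> e}. \<sigma> x)" by simp
  qed
  also have "\<dots> = (\<Prod>x\<in>V. \<Prod>e\<in>{e\<in>F. x \<in> e}. \<sigma> x)"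
    by (rule prod.swap_restrict[OF fF finV])
  also have "\<dots> = (\<Prod>x\<in>V. \<sigma> x ^ card {e\<in>F. x \<in> e})" by simp
  also have "\<dots> = (\<Prod>x\<in>V. if odd (card {e\<in>F. x \<in> e}) then \<sigma> x else 1)"
  proof (rule prod.cong[OF refl])
    fix x
    show "\<sigma> x ^ card {e\<in>F. x \<in> e} = (if odd (card {e\<in>F. x \<in> e}) then \<sigma> x else 1)"
      using pow_odd[of \<sigma> x "card {e\<in>F. x \<in> e}"] spins_val[OF assms(2), of x] by blast
  qed
  also have "\<dots> = (\<Prod>x\<in>{x\<in>V. odd (card {e\<in>F. x \<in> e})}. \<sigma> x)"
    by (rule prod.inter_filter[OF finV, symmetric])
  also have "\<dots> = (\<Prod>x\<in>bdry V F. \<sigma> x)" unfolding bdry_def ..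
  finally show ?thesis .
qed

end


context gr begin

lemma finite_Pow_sub: "\<omega> \<subseteq> E \<Longrightarrow> finite \<omega>"
  using finE finite_subset by blast

lemma fmap_iff: "\<sigma> \<in> fmap V E \<omega> \<longleftrightarrow> \<sigma> \<in> spins V \<and> \<omega> \<subseteq> agree_edges E \<sigma>"
  unfolding fmap_def by auto

lemma prod_one_plus:
  assumes "\<omega> \<subseteq> E" "\<sigma> \<in> spins V"
  shows "(\<Prod>e\<in>\<omega>. 1 + (\<Prod>x\<in>e. \<sigma> x)) = (if \<omega> \<subseteq> agree_edges E \<sigma> then 2 ^ card \<omega> else 0)"
proof -
  have f: "(\<Prod>e\<in>\<omega>. 1 + (\<Prod>x\<in>e. \<sigma> x)) = (\<Prod>e\<in>\<omega>. if e \<in> agree_edges E \<sigma> then 2 else 0)"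
  proof (rule prod.cong[OF refl])
    fix e assume "e \<in> \<omega>"
    then have "e \<in> E" using assms by auto
    then show "1 + (\<Prod>x\<in>e. \<sigma> x) = (if e \<in> agree_edges E \<sigma> then 2 else 0)"
      using edge_val[OF _ assms(2)] by simp
  qed
  show ?thesis
  proof (cases "\<omega> \<subseteq> agree_edges E \<sigma>")
    case True
    then have "(\<Prod>e\<in>\<omega>. if e \<in> agree_edges E \<sigma> then 2 else (0::real)) = (\<Prod>e\<in>\<omega>. 2)"
      by (intro prod.cong) auto
    then show ?thesis using f True by simp
  next
    case False
    then obtain e where "e \<in> \<omega>" "e \<notin> agree_edges E \<sigma>" by auto
    then have "(\<Prod>e\<in>\<omega>. if e \<in> agree_edges E \<sigma> then 2 else (0::real)) = 0"
      using finite_Pow_sub[OF assms(1)] by (intro prod_zero) auto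
    then show ?thesis using f False by simp
  qed
qed

lemma count_even:
  assumes "\<omega> \<subseteq> E"
  shows "real (card (spins V)) * real (card {F\<in>Pow \<omega>. bdry V F = {}})
       = 2 ^ card \<omega> * real (card (fmap V E \<omega>))"
proof -
  have fo: "finite \<omega>" using finite_Pow_sub[OF assms] .
  have fS: "finite (spins V)" using finite_spins[OF finV] .
  have "(\<Sum>\<sigma>\<in>spins V. \<Prod>e\<in>\<omega>. 1 + (\<Prod>x\<in>e. \<sigma> x))
      = (\<Sum>\<sigma>\<in>spins V. if \<omega> \<subseteq> agree_edges E \<sigma> then 2 ^ card \<omega> else 0)"
    using prod_one_plus[OF assms] by (intro sum.cong) auto
  also have "\<dots> = (\<Sum>\<sigma>\<in>{\<sigma>\<in>spins V. \<omega> \<subseteq> agree_edges E \<sigma>}. 2 ^ card \<omega>)"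
    by (rule sum.inter_filter[OF fS, symmetric])
  also have "\<dots> = 2 ^ card \<omega> * real (card (fmap V E \<omega>))"
    unfolding fmap_def by simp
  finally have L: "(\<Sum>\<sigma>\<in>spins V. \<Prod>e\<in>\<omega>. 1 + (\<Prod>x\<in>e. \<sigma> x)) = 2 ^ card \<omega> * real (card (fmap V E \<omega>))" .
  have "(\<Sum>\<sigma>\<in>spins V. \<Prod>e\<in>\<omega>. 1 + (\<Prod>x\<in>e. \<sigma> x))
      = (\<Sum>\<sigma>\<in>spins V. \<Sum>F\<in>Pow \<omega>. \<Prod>x\<in>bdry V F. \<sigma> x)"
  proof (rule sum.cong[OF refl])
    fix \<sigma> assume s: "\<sigma> \<in> spins V"
    have "(\<Prod>e\<in>\<omega>. 1 + (\<Prod>x\<in>e. \<sigma> x)) = (\<Prod>e\<in>\<omega>. (\<Prod>x\<in>e. \<sigma> x) + 1)"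
      by (simp add: add.commute)
    also have "\<dots> = (\<Sum>F\<in>Pow \<omega>. (\<Prod>e\<in>F. \<Prod>x\<in>e. \<sigma> x) * (\<Prod>e\<in>\<omega> - F. 1))"
      by (rule prod_add[OF fo])
    also have "\<dots> = (\<Sum>F\<in>Pow \<omega>. \<Prod>x\<in>bdry V F. \<sigma> x)"
    proof (rule sum.cong[OF refl])
      fix F assume "F \<in> Pow \<omega>"
      then have "F \<subseteq> E" using assms by auto
      then show "(\<Prod>e\<in>F. \<Prod>x\<in>e. \<sigma> x) * (\<Prod>e\<in>\<omega> - F. 1) = (\<Prod>x\<in>bdry V F. \<sigma> x)"
        using edge_prod_bdry[OF _ s] by simp
    qed
    finally show "(\<Prod>e\<in>\<omega>. 1 + (\<Prod>x\<in>e. \<sigma> x)) = (\<Sum>F\<in>Pow \<omega>. \<Prod>x\<in>bdry V F. \<sigma> x)" .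
  qed
  also have "\<dots> = (\<Sum>F\<in>Pow \<omega>. \<Sum>\<sigma>\<in>spins V. \<Prod>x\<in>bdry V F. \<sigma> x)"
    by (rule sum.swap)
  also have "\<dots> = (\<Sum>F\<in>Pow \<omega>. if bdry V F = {} then real (card (spins V)) else 0)"
    using char_sum[OF finV bdry_subset] by (intro sum.cong) auto
  also have "\<dots> = (\<Sum>F\<in>{F\<in>Pow \<omega>. bdry V F = {}}. real (card (spins V)))"
    using fo by (intro sum.inter_filter[symmetric]) auto
  also have "\<dots> = real (card (spins V)) * real (card {F\<in>Pow \<omega>. bdry V F = {}})"
    by simp
  finally show ?thesis using L by simp
qed

lemma count_A:
  assumes "\<omega> \<subseteq> E"
  shows "card {F\<in>Pow \<omega>. bdry V F = A} = (if \<omega> \<in> FA V E A then card {F\<in>Pow \<omega>. bdry V F = {}} else 0)"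
proof (cases "\<omega> \<in> FA V E A")
  case True
  then obtain F0 where F0: "F0 \<subseteq> \<omega>" "bdry V F0 = A" unfolding FA_def by auto
  have fo: "finite \<omega>" using finite_Pow_sub[OF assms] .
  have fin: "F \<subseteq> \<omega> \<Longrightarrow> finite F" for F using fo finite_subset by blast
  have "bij_betw (symdiff F0) {F\<in>Pow \<omega>. bdry V F = {}} {F\<in>Pow \<omega>. bdry V F = A}"
  proof (rule bij_betwI[where g = "symdiff F0"])
    show "symdiff F0 \<in> {F \<in> Pow \<omega>. bdry V F = {}} \<rightarrow> {F \<in> Pow \<omega>. bdry V F = A}"
    proof
      fix F assume F: "F \<in> {F \<in> Pow \<omega>. bdry V F = {}}"
      then have "bdry V (symdiff F0 F) = symdiff A {}" using bdry_symdiff[OF fin fin] F0 by auto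
      then show "symdiff F0 F \<in> {F \<in> Pow \<omega>. bdry V F = A}" using F F0 by (auto simp: symdiff_def)
    qed
    show "symdiff F0 \<in> {F \<in> Pow \<omega>. bdry V F = A} \<rightarrow> {F \<in> Pow \<omega>. bdry V F = {}}"
    proof
      fix F assume F: "F \<in> {F \<in> Pow \<omega>. bdry V F = A}"
      then have "bdry V (symdiff F0 F) = symdiff A A" using bdry_symdiff[OF fin fin] F0 by auto
      then show "symdiff F0 F \<in> {F \<in> Pow \<omega>. bdry V F = {}}" using F F0 by (auto simp: symdiff_def)
    qed
  qed (auto simp: symdiff_invol)
  then show ?thesis using True by (simp add: bij_betw_same_card)
next
  case False
  have e: "{F\<in>Pow \<omega>. bdry V F = A} = {}" using assms False unfolding FA_def by auto
  show ?thesis unfolding e using False by simp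
qed

end


definition Pf :: "'v set \<Rightarrow> ('v set \<Rightarrow> real) \<Rightarrow> 'v set \<Rightarrow> 'v set set \<Rightarrow> real" where
  "Pf V K C \<omega> = (\<Sum>F\<in>{F\<in>Pow \<omega>. bdry V F = C}. (\<Prod>e\<in>F. sinh (K e)) * (\<Prod>e\<in>\<omega> - F. cosh (K e) - 1))"

definition Qc :: "'v set \<Rightarrow> 'v set set \<Rightarrow> ('v set \<Rightarrow> real) \<Rightarrow> 'v set \<Rightarrow> real" where
  "Qc V H K C = (\<Sum>F\<in>{F\<in>Pow H. bdry V F = C}. (\<Prod>e\<in>F. sinh (K e)) * (\<Prod>e\<in>H - F. cosh (K e)))"

lemma exp_pm:
  assumes "x = 1 \<or> x = -1"
  shows "exp (k * x) = x * sinh k + cosh (k::real)"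
  using assms cosh_plus_sinh[of k] cosh_minus_sinh[of k] by auto

context gr begin

lemma ising_expand:
  assumes "H \<subseteq> E" "\<sigma> \<in> spins V"
  shows "ising_weight H K \<sigma> = (\<Sum>F\<in>Pow H. ((\<Prod>e\<in>F. sinh (K e)) * (\<Prod>e\<in>H - F. cosh (K e))) * (\<Prod>x\<in>bdry V F. \<sigma> x))"
proof -
  have fH: "finite H" using finite_Pow_sub[OF assms(1)] .
  have xv: "(\<Prod>x\<in>e. \<sigma> x) = 1 \<or> (\<Prod>x\<in>e. \<sigma> x) = -1" if "e \<in> H" for e
  proof -
    have "e \<in> E" using assms that by auto
    then show ?thesis using edge_val[OF _ assms(2)] by simp
  qed
  have "ising_weight H K \<sigma> = (\<Prod>e\<in>H. exp (K e * (\<Prod>x\<in>e. \<sigma> x)))"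
    unfolding ising_weight_def by (rule exp_sum[OF fH])
  also have "\<dots> = (\<Prod>e\<in>H. (\<Prod>x\<in>e. \<sigma> x) * sinh (K e) + cosh (K e))"
    using exp_pm[OF xv] by (intro prod.cong) auto
  also have "\<dots> = (\<Sum>F\<in>Pow H. (\<Prod>e\<in>F. (\<Prod>x\<in>e. \<sigma> x) * sinh (K e)) * (\<Prod>e\<in>H - F. cosh (K e)))"
    by (rule prod_add[OF fH])
  also have "\<dots> = (\<Sum>F\<in>Pow H. ((\<Prod>e\<in>F. sinh (K e)) * (\<Prod>e\<in>H - F. cosh (K e))) * (\<Prod>x\<in>bdry V F. \<sigma> x))"
  proof (rule sum.cong[OF refl])
    fix F assume "F \<in> Pow H"
    then have FE: "F \<subseteq> E" using assms by auto
    have "(\<Prod>e\<in>F. (\<Prod>x\<in>e. \<sigma> x) * sinh (K e)) = (\<Prod>e\<in>F. \<Prod>x\<in>e. \<sigma> x) * (\<Prod>e\<in>F. sinh (K e))"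
      by (rule prod.distrib)
    also have "\<dots> = (\<Prod>x\<in>bdry V F. \<sigma> x) * (\<Prod>e\<in>F. sinh (K e))"
      using edge_prod_bdry[OF FE assms(2)] by simp
    finally show "(\<Prod>e\<in>F. (\<Prod>x\<in>e. \<sigma> x) * sinh (K e)) * (\<Prod>e\<in>H - F. cosh (K e)) =
        ((\<Prod>e\<in>F. sinh (K e)) * (\<Prod>e\<in>H - F. cosh (K e))) * (\<Prod>x\<in>bdry V F. \<sigma> x)"
      by (simp only: ac_simps)
  qed
  finally show ?thesis .
qed

lemma ising_corr_sum:
  assumes "H \<subseteq> E" "C \<subseteq> V"
  shows "(\<Sum>\<sigma>\<in>spins V. (\<Prod>x\<in>C. \<sigma> x) * ising_weight H K \<sigma>) = real (card (spins V)) * Qc V H K C"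
proof -
  have fH: "finite H" using finite_Pow_sub[OF assms(1)] .
  have fC: "finite C" using assms(2) finV finite_subset by blast
  define a where "a F = (\<Prod>e\<in>F. sinh (K e)) * (\<Prod>e\<in>H - F. cosh (K e))" for F
  have "(\<Sum>\<sigma>\<in>spins V. (\<Prod>x\<in>C. \<sigma> x) * ising_weight H K \<sigma>)
      = (\<Sum>\<sigma>\<in>spins V. \<Sum>F\<in>Pow H. a F * (\<Prod>x\<in>symdiff C (bdry V F). \<sigma> x))"
  proof (rule sum.cong[OF refl])
    fix \<sigma> assume s: "\<sigma> \<in> spins V"
    have fb: "finite (bdry V F)" for F using finV finite_subset[OF bdry_subset] by blast
    have "(\<Prod>x\<in>C. \<sigma> x) * ising_weight H K \<sigma> = (\<Sum>F\<in>Pow H. a F * ((\<Prod>x\<in>C. \<sigma> x) * (\<Prod>x\<in>bdry V F. \<sigma> x)))"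
      unfolding ising_expand[OF assms(1) s] a_def by (simp add: sum_distrib_left ac_simps)
    also have "\<dots> = (\<Sum>F\<in>Pow H. a F * (\<Prod>x\<in>symdiff C (bdry V F). \<sigma> x))"
      using prod_symdiff[OF s fC fb] by simp
    finally show "(\<Prod>x\<in>C. \<sigma> x) * ising_weight H K \<sigma> = (\<Sum>F\<in>Pow H. a F * (\<Prod>x\<in>symdiff C (bdry V F). \<sigma> x))" .
  qed
  also have "\<dots> = (\<Sum>F\<in>Pow H. a F * (\<Sum>\<sigma>\<in>spins V. \<Prod>x\<in>symdiff C (bdry V F). \<sigma> x))"
    by (subst sum.swap) (simp add: sum_distrib_left)
  also have "\<dots> = (\<Sum>F\<in>Pow H. if bdry V F = C then a F * real (card (spins V)) else 0)"
  proof (rule sum.cong[OF refl])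
    fix F
    have sub: "symdiff C (bdry V F) \<subseteq> V" using assms(2) bdry_subset[of V F] unfolding symdiff_def by auto
    show "a F * (\<Sum>\<sigma>\<in>spins V. \<Prod>x\<in>symdiff C (bdry V F). \<sigma> x) = (if bdry V F = C then a F * real (card (spins V)) else 0)"
      unfolding char_sum[OF finV sub] symdiff_empty_iff by auto
  qed
  also have "\<dots> = (\<Sum>F\<in>{F\<in>Pow H. bdry V F = C}. a F * real (card (spins V)))"
    using fH by (intro sum.inter_filter[symmetric]) auto
  also have "\<dots> = real (card (spins V)) * Qc V H K C"
    unfolding Qc_def a_def by (simp add: sum_distrib_left ac_simps)
  finally show ?thesis .
qed

lemma ising_Z_pos: "ising_Z V H K > 0"
  unfolding ising_Z_def ising_weight_def
  using finite_spins[OF finV] one_spins[of V]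
  by (intro sum_pos) auto

lemma sum_Pf:
  assumes "H \<subseteq> E"
  shows "(\<Sum>\<omega>\<in>Pow H. Pf V K C \<omega>) = Qc V H K C"
proof -
  have fH: "finite H" using finite_Pow_sub[OF assms(1)] .
  define t where "t \<omega> F = (\<Prod>e\<in>F. sinh (K e)) * (\<Prod>e\<in>\<omega> - F. cosh (K e) - 1)" for \<omega> F
  have "(\<Sum>\<omega>\<in>Pow H. Pf V K C \<omega>) = (\<Sum>\<omega>\<in>Pow H. \<Sum>F\<in>Pow H. if F \<subseteq> \<omega> \<and> bdry V F = C then t \<omega> F else 0)"
  proof (rule sum.cong[OF refl])
    fix \<omega> assume o: "\<omega> \<in> Pow H"
    have eq: "{F\<in>Pow \<omega>. bdry V F = C} = {F\<in>Pow H. F \<subseteq> \<omega> \<and> bdry V F = C}" using o by auto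
    have "Pf V K C \<omega> = (\<Sum>F\<in>{F\<in>Pow H. F \<subseteq> \<omega> \<and> bdry V F = C}. t \<omega> F)"
      unfolding Pf_def t_def eq ..
    also have "\<dots> = (\<Sum>F\<in>Pow H. if F \<subseteq> \<omega> \<and> bdry V F = C then t \<omega> F else 0)"
      using fH by (intro sum.inter_filter) simp
    finally show "Pf V K C \<omega> = (\<Sum>F\<in>Pow H. if F \<subseteq> \<omega> \<and> bdry V F = C then t \<omega> F else 0)" .
  qed
  also have "\<dots> = (\<Sum>F\<in>Pow H. \<Sum>\<omega>\<in>Pow H. if F \<subseteq> \<omega> \<and> bdry V F = C then t \<omega> F else 0)"
    by (rule sum.swap)
  also have "\<dots> = (\<Sum>F\<in>Pow H. if bdry V F = C then (\<Prod>e\<in>F. sinh (K e)) * (\<Prod>e\<in>H - F. cosh (K e)) else 0)"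
  proof (rule sum.cong[OF refl])
    fix F assume F: "F \<in> Pow H"
    show "(\<Sum>\<omega>\<in>Pow H. if F \<subseteq> \<omega> \<and> bdry V F = C then t \<omega> F else 0)
        = (if bdry V F = C then (\<Prod>e\<in>F. sinh (K e)) * (\<Prod>e\<in>H - F. cosh (K e)) else 0)"
    proof (cases "bdry V F = C")
      case False then show ?thesis by simp
    next
      case True
      have "(\<Sum>\<omega>\<in>Pow H. if F \<subseteq> \<omega> \<and> bdry V F = C then t \<omega> F else 0) = (\<Sum>\<omega>\<in>{\<omega>\<in>Pow H. F \<subseteq> \<omega>}. t \<omega> F)"
        using True fH by (simp add: sum.inter_filter[of "Pow H", symmetric])
      also have "\<dots> = (\<Sum>X\<in>Pow (H - F). t (F \<union> X) F)"
      proof (rule sum.reindex_bij_betw[symmetric])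
        show "bij_betw (\<lambda>X. F \<union> X) (Pow (H - F)) {\<omega> \<in> Pow H. F \<subseteq> \<omega>}"
          by (rule bij_betwI[where g = "\<lambda>\<omega>. \<omega> - F"]) (use F in auto)
      qed
      also have "\<dots> = (\<Sum>X\<in>Pow (H - F). (\<Prod>e\<in>F. sinh (K e)) * ((\<Prod>e\<in>X. cosh (K e) - 1) * (\<Prod>e\<in>H - F - X. 1)))"
      proof (rule sum.cong[OF refl])
        fix X assume "X \<in> Pow (H - F)"
        then have "F \<union> X - F = X" by auto
        then show "t (F \<union> X) F = (\<Prod>e\<in>F. sinh (K e)) * ((\<Prod>e\<in>X. cosh (K e) - 1) * (\<Prod>e\<in>H - F - X. 1))"
          unfolding t_def by simp
      qed
      also have "\<dots> = (\<Prod>e\<in>F. sinh (K e)) * (\<Prod>e\<in>H - F. (cosh (K e) - 1) + 1)"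
        using prod_add[of "H - F" "\<lambda>e. cosh (K e) - 1" "\<lambda>_. 1"] fH by (simp add: sum_distrib_left)
      also have "\<dots> = (\<Prod>e\<in>F. sinh (K e)) * (\<Prod>e\<in>H - F. cosh (K e))" by simp
      finally show ?thesis using True by simp
    qed
  qed
  also have "\<dots> = Qc V H K C"
    unfolding Qc_def using fH by (intro sum.inter_filter[symmetric]) simp
  finally show ?thesis .
qed

end


lemma sources_eq:
  assumes "finite H" "\<omega> \<subseteq> H" "\<And>e. e \<notin> \<omega> \<Longrightarrow> n e = 0"
  shows "{v\<in>V. odd (\<Sum>e\<in>{e\<in>H. v \<in> e}. n e)} = bdry V {e\<in>\<omega>. odd (n e)}"
proof -
  have "odd (\<Sum>e\<in>{e\<in>H. v \<in> e}. n e) \<longleftrightarrow> odd (card {e\<in>{e\<in>\<omega>. odd (n e)}. v \<in> e})" for v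
  proof -
    have "{a\<in>{e\<in>H. v \<in> e}. odd (n a)} = {e\<in>{e\<in>\<omega>. odd (n e)}. v \<in> e}"
      using assms by fastforce
    then show ?thesis using even_sum_iff[of "{e\<in>H. v \<in> e}" n] assms(1) by simp
  qed
  then show ?thesis unfolding bdry_def by auto
qed

lemma piece_has_sum:
  fixes K :: "'v set \<Rightarrow> real"
  assumes fH: "finite H" and oH: "\<omega> \<subseteq> H" and Fo: "F \<subseteq> \<omega>" and Kp: "\<And>e. e \<in> \<omega> \<Longrightarrow> K e \<ge> 0"
  shows "(poisson_weight H K has_sum ((\<Prod>e\<in>H. exp (- K e)) * ((\<Prod>e\<in>F. sinh (K e)) * (\<Prod>e\<in>\<omega> - F. cosh (K e) - 1))))
           {n. (\<forall>e. e \<notin> \<omega> \<longrightarrow> n e = 0) \<and> (\<forall>e\<in>\<omega>. n e > 0 \<and> (odd (n e) \<longleftrightarrow> e \<in> F))}"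
proof -
  have fo: "finite \<omega>" using fH oH finite_subset by blast
  define D where "D e = (if e \<in> F then {n::nat. odd n} else {n. even n \<and> n > 0})" for e
  define s where "s e = (if e \<in> F then sinh (K e) else cosh (K e) - 1)" for e
  define ext where "ext p = (\<lambda>e. if e \<in> \<omega> then p e else (0::nat))" for p :: "'v set \<Rightarrow> nat"
  define ew where "ew = (\<Prod>e\<in>H. exp (- K e))"
  let ?M = "{n. (\<forall>e. e \<notin> \<omega> \<longrightarrow> n e = 0) \<and> (\<forall>e\<in>\<omega>. n e > 0 \<and> (odd (n e) \<longleftrightarrow> e \<in> F))}"
  have bij: "bij_betw ext (PiE \<omega> D) ?M"
  proof (rule bij_betwI[where g = "\<lambda>n. restrict n \<omega>"])
    show "ext \<in> PiE \<omega> D \<rightarrow> ?M"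
    proof
      fix p assume p: "p \<in> PiE \<omega> D"
      have h: "p e \<in> D e" if "e \<in> \<omega>" for e using p that by auto
      have "\<forall>e\<in>\<omega>. p e > 0 \<and> (odd (p e) \<longleftrightarrow> e \<in> F)"
      proof
        fix e assume e: "e \<in> \<omega>"
        show "p e > 0 \<and> (odd (p e) \<longleftrightarrow> e \<in> F)"
          using h[OF e] by (cases "e \<in> F") (auto simp: D_def odd_pos)
      qed
      then show "ext p \<in> ?M" unfolding ext_def by auto
    qed
    show "(\<lambda>n. restrict n \<omega>) \<in> ?M \<rightarrow> PiE \<omega> D"
      unfolding D_def by auto
    show "restrict (ext p) \<omega> = p" if "p \<in> PiE \<omega> D" for p
      using that unfolding ext_def by (auto simp: restrict_def extensional_def PiE_def fun_eq_iff)
    show "ext (restrict n \<omega>) = n" if "n \<in> ?M" for n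
      using that unfolding ext_def by (auto simp: fun_eq_iff)
  qed
  have pw: "poisson_weight H K (ext p) = ew * (\<Prod>e\<in>\<omega>. K e ^ p e / fact (p e))" for p
  proof -
    have "poisson_weight H K (ext p) = (\<Prod>e\<in>H. exp (- K e) * (K e ^ ext p e / fact (ext p e)))"
      unfolding poisson_weight_def by (simp add: field_simps)
    also have "\<dots> = ew * (\<Prod>e\<in>H. K e ^ ext p e / fact (ext p e))"
      unfolding ew_def by (rule prod.distrib)
    also have "(\<Prod>e\<in>H. K e ^ ext p e / fact (ext p e)) = (\<Prod>e\<in>\<omega>. K e ^ ext p e / fact (ext p e))"
      using fH oH by (intro prod.mono_neutral_right) (auto simp: ext_def)
    also have "\<dots> = (\<Prod>e\<in>\<omega>. K e ^ p e / fact (p e))"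
      by (intro prod.cong) (auto simp: ext_def)
    finally show ?thesis .
  qed
  have per: "((\<lambda>n. K e ^ n / fact n) has_sum s e) (D e)" if "e \<in> \<omega>" for e
    unfolding s_def D_def using sinh_has_sum[of "K e"] cosh1_has_sum[of "K e"] Kp[OF that] by auto
  have "((\<lambda>p. \<Prod>e\<in>\<omega>. K e ^ p e / fact (p e)) has_sum (\<Prod>e\<in>\<omega>. s e)) (PiE \<omega> D)"
    by (rule has_sum_prod_PiE_nonneg[OF fo per]) (use Kp in auto)
  then have "((\<lambda>p. ew * (\<Prod>e\<in>\<omega>. K e ^ p e / fact (p e))) has_sum (ew * (\<Prod>e\<in>\<omega>. s e))) (PiE \<omega> D)"
    by (rule has_sum_cmult_right)
  then have "((\<lambda>p. poisson_weight H K (ext p)) has_sum (ew * (\<Prod>e\<in>\<omega>. s e))) (PiE \<omega> D)"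
    by (simp add: pw)
  then have "(poisson_weight H K has_sum (ew * (\<Prod>e\<in>\<omega>. s e))) ?M"
    using has_sum_reindex_bij_betw[OF bij] by blast
  moreover have "(\<Prod>e\<in>\<omega>. s e) = (\<Prod>e\<in>F. sinh (K e)) * (\<Prod>e\<in>\<omega> - F. cosh (K e) - 1)"
  proof -
    have "(\<Prod>e\<in>\<omega>. s e) = (\<Prod>e\<in>\<omega> \<inter> {x. x \<in> F}. sinh (K e)) * (\<Prod>e\<in>\<omega> \<inter> - {x. x \<in> F}. cosh (K e) - 1)"
      unfolding s_def by (rule prod.If_cases[OF fo])
    moreover have "\<omega> \<inter> {x. x \<in> F} = F" "\<omega> \<inter> - {x. x \<in> F} = \<omega> - F" using Fo by auto
    ultimately show ?thesis by simp
  qed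
  ultimately show ?thesis unfolding ew_def by simp
qed

lemma W_has_sum:
  fixes K :: "'v set \<Rightarrow> real"
  assumes fH: "finite H" and oH: "\<omega> \<subseteq> H" and Kp: "\<And>e. e \<in> \<omega> \<Longrightarrow> K e \<ge> 0"
  shows "(poisson_weight H K has_sum ((\<Prod>e\<in>H. exp (- K e)) * Pf V K C \<omega>))
           {n\<in>currents V H C. {e. n e > 0} = \<omega>}"
proof -
  have fo: "finite \<omega>" using fH oH finite_subset by blast
  define M where "M F = {n :: 'v set \<Rightarrow> nat. (\<forall>e. e \<notin> \<omega> \<longrightarrow> n e = 0) \<and> (\<forall>e\<in>\<omega>. n e > 0 \<and> (odd (n e) \<longleftrightarrow> e \<in> F))}" for F
  define w where "w F = (\<Prod>e\<in>H. exp (- K e)) * ((\<Prod>e\<in>F. sinh (K e)) * (\<Prod>e\<in>\<omega> - F. cosh (K e) - 1))" for F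
  let ?A = "{F\<in>Pow \<omega>. bdry V F = C}"
  have "(poisson_weight H K has_sum (sum w ?A)) (\<Union>F\<in>?A. M F)"
  proof (rule sum_has_sum)
    show "finite ?A" using fo by simp
    show "(poisson_weight H K has_sum w F) (M F)" if "F \<in> ?A" for F
      unfolding w_def M_def using piece_has_sum[OF fH oH _ Kp] that by auto
    show "M F \<inter> M F' = {}" if "F \<in> ?A" "F' \<in> ?A" "F \<noteq> F'" for F F'
    proof (rule ccontr)
      assume "M F \<inter> M F' \<noteq> {}"
      then obtain n where n: "n \<in> M F" "n \<in> M F'" by auto
      have "F = {e\<in>\<omega>. odd (n e)}" "F' = {e\<in>\<omega>. odd (n e)}"
        using n that unfolding M_def by auto
      then show False using that by simp
    qed
  qed
  moreover have "(\<Union>F\<in>?A. M F) = {n\<in>currents V H C. {e. n e > 0} = \<omega>}"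
  proof (rule set_eqI)
    fix n
    show "n \<in> (\<Union>F\<in>?A. M F) \<longleftrightarrow> n \<in> {n\<in>currents V H C. {e. n e > 0} = \<omega>}"
    proof
      assume "n \<in> (\<Union>F\<in>?A. M F)"
      then obtain F where F: "F \<subseteq> \<omega>" "bdry V F = C" "n \<in> M F" by auto
      have z: "\<And>e. e \<notin> \<omega> \<Longrightarrow> n e = 0" using F unfolding M_def by auto
      have Fe: "F = {e\<in>\<omega>. odd (n e)}" using F unfolding M_def by auto
      have tr: "{e. n e > 0} = \<omega>" using F z unfolding M_def by auto
      have s1: "\<forall>e. e \<notin> H \<longrightarrow> n e = 0" using z oH by auto
      have s2: "{v\<in>V. odd (\<Sum>e\<in>{e\<in>H. v \<in> e}. n e)} = C"
        using sources_eq[OF fH oH z] Fe F(2) by simp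
      show "n \<in> {n\<in>currents V H C. {e. n e > 0} = \<omega>}"
        unfolding currents_def using s1 s2 tr by simp
    next
      assume "n \<in> {n\<in>currents V H C. {e. n e > 0} = \<omega>}"
      then have c: "n \<in> currents V H C" and tr: "{e. n e > 0} = \<omega>" by auto
      have z: "\<And>e. e \<notin> \<omega> \<Longrightarrow> n e = 0" using tr by auto
      have "{v\<in>V. odd (\<Sum>e\<in>{e\<in>H. v \<in> e}. n e)} = C"
        using c unfolding currents_def by simp
      then have "bdry V {e\<in>\<omega>. odd (n e)} = C"
        using sources_eq[OF fH oH z] by simp
      moreover have "n \<in> M {e\<in>\<omega>. odd (n e)}" unfolding M_def using z tr by auto
      moreover have "{e\<in>\<omega>. odd (n e)} \<in> Pow \<omega>" by auto
      ultimately show "n \<in> (\<Union>F\<in>?A. M F)" by blast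
    qed
  qed
  moreover have "sum w ?A = (\<Prod>e\<in>H. exp (- K e)) * Pf V K C \<omega>"
    unfolding w_def Pf_def by (simp add: sum_distrib_left)
  ultimately show ?thesis by simp
qed


context gr begin

lemma rc_prob_closed:
  fixes K :: "'v set \<Rightarrow> real"
  assumes HE: "H \<subseteq> E" and Kp: "\<And>e. e \<in> H \<Longrightarrow> K e \<ge> 0"
  shows "rc_prob V H K C \<omega> = (if \<omega> \<subseteq> H then Pf V K C \<omega> else 0) / Qc V H K C"
proof -
  have fH: "finite H" using finite_Pow_sub[OF HE] .
  define ew where "ew = (\<Prod>e\<in>H. exp (- K e))"
  have ew: "ew > 0" unfolding ew_def by (intro prod_pos) auto
  have hs: "(poisson_weight H K has_sum (ew * Pf V K C \<omega>')) {n\<in>currents V H C. {e. n e > 0} = \<omega>'}"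
    if "\<omega>' \<subseteq> H" for \<omega>'
    unfolding ew_def by (rule W_has_sum[OF fH that]) (use Kp that in auto)
  have num: "(\<Sum>\<^sub>\<infinity>n\<in>{n\<in>currents V H C. {e. n e > 0} = \<omega>}. poisson_weight H K n)
      = ew * (if \<omega> \<subseteq> H then Pf V K C \<omega> else 0)"
  proof (cases "\<omega> \<subseteq> H")
    case True then show ?thesis using infsumI[OF hs[OF True]] by simp
  next
    case False
    have "{n\<in>currents V H C. {e. n e > 0} = \<omega>} = {}"
    proof (rule ccontr)
      assume "{n\<in>currents V H C. {e. n e > 0} = \<omega>} \<noteq> {}"
      then obtain n where n: "n \<in> currents V H C" "{e. n e > 0} = \<omega>" by blast
      have "\<forall>e. e \<notin> H \<longrightarrow> n e = 0" using n(1) unfolding currents_def by simp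
      then have "\<omega> \<subseteq> H" using n(2) by auto
      then show False using False by simp
    qed
    then show ?thesis using False by (simp only: infsum_empty) simp
  qed
  have "(poisson_weight H K has_sum (\<Sum>\<omega>'\<in>Pow H. ew * Pf V K C \<omega>'))
          (\<Union>\<omega>'\<in>Pow H. {n\<in>currents V H C. {e. n e > 0} = \<omega>'})"
    by (rule sum_has_sum) (use fH hs in auto)
  moreover have "(\<Union>\<omega>'\<in>Pow H. {n\<in>currents V H C. {e. n e > 0} = \<omega>'}) = currents V H C"
  proof -
    have "{e. n e > 0} \<subseteq> H" if "n \<in> currents V H C" for n
      using that unfolding currents_def by auto
    then show ?thesis by blast
  qed
  moreover have "(\<Sum>\<omega>'\<in>Pow H. ew * Pf V K C \<omega>') = ew * Qc V H K C"
    using sum_Pf[OF HE] by (simp add: sum_distrib_left[symmetric])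
  ultimately have den: "(\<Sum>\<^sub>\<infinity>n\<in>currents V H C. poisson_weight H K n) = ew * Qc V H K C"
    using infsumI by fastforce
  show ?thesis unfolding rc_prob_def num den using ew by simp
qed

lemma sinh_nn: "x \<ge> 0 \<Longrightarrow> sinh (x::real) \<ge> 0" by simp
lemma cosh1_nn: "cosh (x::real) - 1 \<ge> 0" using cosh_real_ge_1[of x] by simp

lemma Pf_nonneg:
  assumes "\<And>e. e \<in> \<omega> \<Longrightarrow> K e \<ge> 0"
  shows "Pf V K C \<omega> \<ge> 0"
  unfolding Pf_def using assms
  by (intro sum_nonneg mult_nonneg_nonneg prod_nonneg) (auto simp: cosh_real_ge_1)

lemma Qc_nonneg:
  assumes "\<And>e. e \<in> H \<Longrightarrow> K e \<ge> 0"
  shows "Qc V H K C \<ge> 0"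
  unfolding Qc_def using assms
  by (intro sum_nonneg mult_nonneg_nonneg prod_nonneg) auto

end


context gr begin

lemma fmap_step:
  assumes "\<sigma> \<in> fmap V E \<omega>" "(u, v) \<in> ({(u, v). {u, v} \<in> \<omega>})\<^sup>*"
  shows "\<sigma> u = \<sigma> v"
  using assms(2)
proof (induction rule: rtrancl_induct)
  case base then show ?case by simp
next
  case (step y z)
  then have "{y, z} \<in> agree_edges E \<sigma>" using assms(1) unfolding fmap_def by auto
  then obtain a b where "{y, z} = {a, b}" "\<sigma> a = \<sigma> b" unfolding agree_edges_def by auto
  then have "\<sigma> y = \<sigma> z" by (auto simp: doubleton_eq_iff)
  then show ?case using step by simp
qed

lemma conn_self: "v \<in> V \<Longrightarrow> v \<in> conn V \<omega> `` {v}"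
  unfolding conn_def by auto

lemma conn_edge:
  assumes "{u, v} \<in> \<omega>" "u \<in> V" "v \<in> V"
  shows "conn V \<omega> `` {u} = conn V \<omega> `` {v}"
proof -
  let ?R = "{(u, v). {u, v} \<in> \<omega>}"
  have uv: "(u, v) \<in> ?R\<^sup>*" using assms by auto
  have vu: "(v, u) \<in> ?R\<^sup>*" using assms by (auto simp: insert_commute)
  show ?thesis unfolding conn_def using assms uv vu
    by (auto intro: rtrancl_trans)
qed

lemma finite_clusters: "finite (clusters V \<omega>)"
  unfolding clusters_def quotient_def using finV by auto

lemma spread_bij:
  assumes oE: "\<omega> \<subseteq> E"
  shows "bij_betw (spread V \<omega>) (clusters V \<omega> \<rightarrow>\<^sub>E {-1, 1}) (fmap V E \<omega>)"
proof (rule bij_betw_imageI)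
  show "inj_on (spread V \<omega>) (clusters V \<omega> \<rightarrow>\<^sub>E {-1, 1})"
  proof (rule inj_onI)
    fix s1 s2 assume s1: "s1 \<in> clusters V \<omega> \<rightarrow>\<^sub>E {-1, 1}" and s2: "s2 \<in> clusters V \<omega> \<rightarrow>\<^sub>E {-1, 1}"
      and eq: "spread V \<omega> s1 = spread V \<omega> s2"
    show "s1 = s2"
    proof (rule PiE_ext[OF s1 s2])
      fix c assume "c \<in> clusters V \<omega>"
      then obtain x where x: "x \<in> V" "c = conn V \<omega> `` {x}" unfolding clusters_def by (auto elim: quotientE)
      have "spread V \<omega> s1 x = spread V \<omega> s2 x" using eq by simp
      then show "s1 c = s2 c" using x unfolding spread_def by simp
    qed
  qed
  show "spread V \<omega> ` (clusters V \<omega> \<rightarrow>\<^sub>E {-1, 1}) = fmap V E \<omega>"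
  proof (rule set_eqI, rule iffI)
    fix \<sigma> assume "\<sigma> \<in> spread V \<omega> ` (clusters V \<omega> \<rightarrow>\<^sub>E {-1, 1})"
    then obtain s where s: "s \<in> clusters V \<omega> \<rightarrow>\<^sub>E {-1, 1}" and \<sigma>: "\<sigma> = spread V \<omega> s" by auto
    have sp: "\<sigma> \<in> spins V"
    proof -
      have "s (conn V \<omega> `` {v}) \<in> {-1, 1}" if "v \<in> V" for v
      proof -
        have "conn V \<omega> `` {v} \<in> clusters V \<omega>" unfolding clusters_def using that by (rule quotientI)
        then show ?thesis using s by auto
      qed
      then show ?thesis unfolding spins_def \<sigma> spread_def by auto
    qed
    have ag: "\<omega> \<subseteq> agree_edges E \<sigma>"
    proof
      fix e assume e: "e \<in> \<omega>"
      then have eE: "e \<in> E" using oE by auto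
      obtain u v where uv: "e = {u, v}" "u \<in> V" "v \<in> V" using edge_pair[OF eE] by auto
      have "conn V \<omega> `` {u} = conn V \<omega> `` {v}" using conn_edge[of u v \<omega>] e uv by simp
      then have "\<sigma> u = \<sigma> v" unfolding \<sigma> spread_def using uv by simp
      then show "e \<in> agree_edges E \<sigma>" unfolding agree_edges_def using eE uv by auto
    qed
    show "\<sigma> \<in> fmap V E \<omega>" unfolding fmap_def using sp ag by simp
  next
    fix \<sigma> assume \<sigma>: "\<sigma> \<in> fmap V E \<omega>"
    then have sp: "\<sigma> \<in> spins V" unfolding fmap_def by simp
    define s where "s = restrict (\<lambda>c. \<sigma> (SOME v. v \<in> c)) (clusters V \<omega>)"
    have some_in: "(SOME w. w \<in> conn V \<omega> `` {v}) \<in> conn V \<omega> `` {v}" if "v \<in> V" for v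
      using conn_self[OF that] by (rule someI)
    have sm: "\<sigma> (SOME w. w \<in> conn V \<omega> `` {v}) = \<sigma> v" if "v \<in> V" for v
    proof -
      define w where "w = (SOME w. w \<in> conn V \<omega> `` {v})"
      have "w \<in> conn V \<omega> `` {v}" unfolding w_def using some_in[OF that] .
      then have "(v, w) \<in> conn V \<omega>" by simp
      then have "(v, w) \<in> ({(u, v). {u, v} \<in> \<omega>})\<^sup>*" unfolding conn_def by simp
      then have "\<sigma> v = \<sigma> w" by (rule fmap_step[OF \<sigma>])
      then show ?thesis unfolding w_def by simp
    qed
    have sPi: "s \<in> clusters V \<omega> \<rightarrow>\<^sub>E {-1, 1}"
    proof -
      have "\<sigma> (SOME v. v \<in> c) \<in> {-1, 1}" if "c \<in> clusters V \<omega>" for c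
        using spins_val[OF sp] by auto
      then show ?thesis unfolding s_def by auto
    qed
    have "spread V \<omega> s = \<sigma>"
    proof (rule ext)
      fix v
      show "spread V \<omega> s v = \<sigma> v"
      proof (cases "v \<in> V")
        case True
        have "conn V \<omega> `` {v} \<in> clusters V \<omega>" unfolding clusters_def using True by (rule quotientI)
        then show ?thesis unfolding spread_def s_def using True sm[OF True] by simp
      next
        case False
        then show ?thesis using sp unfolding spread_def spins_def by simp
      qed
    qed
    then show "\<sigma> \<in> spread V \<omega> ` (clusters V \<omega> \<rightarrow>\<^sub>E {-1, 1})" using sPi by (metis imageI)
  qed
qed

lemma card_fmap:
  assumes "\<omega> \<subseteq> E"
  shows "card (fmap V E \<omega>) = 2 ^ kappa V \<omega>"
proof -
  have "card (fmap V E \<omega>) = card (clusters V \<omega> \<rightarrow>\<^sub>E ({-1, 1} :: real set))"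
    using bij_betw_same_card[OF spread_bij[OF assms]] by simp
  also have "\<dots> = 2 ^ kappa V \<omega>"
    unfolding kappa_def using finite_clusters by (simp add: card_PiE numeral_2_eq_2)
  finally show ?thesis .
qed

lemma cluster_sign_law_eq:
  assumes "\<omega> \<subseteq> E"
  shows "cluster_sign_law V \<omega> \<sigma> = (if \<sigma> \<in> fmap V E \<omega> then 1 else 0) / real (card (fmap V E \<omega>))"
proof -
  have bij: "bij_betw (spread V \<omega>) (clusters V \<omega> \<rightarrow>\<^sub>E {-1, 1}) (fmap V E \<omega>)" by (rule spread_bij[OF assms])
  have den: "card (clusters V \<omega> \<rightarrow>\<^sub>E ({-1, 1} :: real set)) = card (fmap V E \<omega>)"
    using bij_betw_same_card[OF bij] by simp
  have num: "card {s \<in> clusters V \<omega> \<rightarrow>\<^sub>E {-1, 1}. spread V \<omega> s = \<sigma>} = (if \<sigma> \<in> fmap V E \<omega> then 1 else 0)"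
  proof (cases "\<sigma> \<in> fmap V E \<omega>")
    case True
    have "\<sigma> \<in> spread V \<omega> ` (clusters V \<omega> \<rightarrow>\<^sub>E {-1, 1})" using True bij unfolding bij_betw_def by simp
    then obtain s0 where s0: "s0 \<in> clusters V \<omega> \<rightarrow>\<^sub>E {-1, 1}" "spread V \<omega> s0 = \<sigma>"
      by blast
    have "{s \<in> clusters V \<omega> \<rightarrow>\<^sub>E {-1, 1}. spread V \<omega> s = \<sigma>} = {s0}"
      using s0 bij unfolding bij_betw_def inj_on_def by auto
    then show ?thesis using True by simp
  next
    case False
    have e: "{s \<in> clusters V \<omega> \<rightarrow>\<^sub>E {-1, 1}. spread V \<omega> s = \<sigma>} = {}"
      using False bij unfolding bij_betw_def by auto
    show ?thesis unfolding e using False by simp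
  qed
  show ?thesis unfolding cluster_sign_law_def num den by simp
qed

end


lemma w1_as_prod:
  fixes s c :: "'e \<Rightarrow> real"
  assumes "finite \<omega>" "F \<subseteq> X" "X \<subseteq> \<omega>"
  shows "(\<Prod>e\<in>F. s e) * (\<Prod>e\<in>X - F. c e) = (\<Prod>e\<in>\<omega>. if e \<in> F then s e else if e \<in> X then c e else 1)"
proof -
  have "(\<Prod>e\<in>\<omega>. if e \<in> F then s e else if e \<in> X then c e else 1)
      = (\<Prod>e\<in>\<omega> \<inter> {x. x \<in> F}. s e) * (\<Prod>e\<in>\<omega> \<inter> - {x. x \<in> F}. if e \<in> X then c e else 1)"
    by (rule prod.If_cases[OF assms(1)])
  also have "(\<Prod>e\<in>\<omega> \<inter> - {x. x \<in> F}. if e \<in> X then c e else 1)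
      = (\<Prod>e\<in>(\<omega> \<inter> - {x. x \<in> F}) \<inter> {x. x \<in> X}. c e) * (\<Prod>e\<in>(\<omega> \<inter> - {x. x \<in> F}) \<inter> - {x. x \<in> X}. 1)"
    using assms(1) by (intro prod.If_cases) auto
  also have "\<omega> \<inter> {x. x \<in> F} = F" using assms by auto
  also have "(\<omega> \<inter> - {x. x \<in> F}) \<inter> {x. x \<in> X} = X - F" using assms by auto
  finally show ?thesis by simp
qed

lemma edge_pair_sum:
  fixes x :: real
  shows
  "b1 \<Longrightarrow> b2 \<Longrightarrow> (\<Sum>a\<in>{(True, True)}. (if b1 then sinh x else if fst a then cosh x - 1 else 1) * (if b2 then sinh x else if snd a then cosh x - 1 else 1)) = (cosh (2 * x) - 1) / 2"
  "b1 \<Longrightarrow> \<not> b2 \<Longrightarrow> (\<Sum>a\<in>{(True, False), (True, True)}. (if b1 then sinh x else if fst a then cosh x - 1 else 1) * (if b2 then sinh x else if snd a then cosh x - 1 else 1)) = sinh (2 * x) / 2"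
  "\<not> b1 \<Longrightarrow> b2 \<Longrightarrow> (\<Sum>a\<in>{(False, True), (True, True)}. (if b1 then sinh x else if fst a then cosh x - 1 else 1) * (if b2 then sinh x else if snd a then cosh x - 1 else 1)) = sinh (2 * x) / 2"
  "\<not> b1 \<Longrightarrow> \<not> b2 \<Longrightarrow> (\<Sum>a\<in>{(True, False), (False, True), (True, True)}. (if b1 then sinh x else if fst a then cosh x - 1 else 1) * (if b2 then sinh x else if snd a then cosh x - 1 else 1)) = (cosh (2 * x) - 1) / 2"
  using cosh_square_eq[of x] sinh_double[of x] cosh_double[of x]
  by (simp_all add: algebra_simps power2_eq_square)

context gr begin

lemma pair_sum:
  fixes J :: "'v set \<Rightarrow> real"
  assumes fo: "finite \<omega>" and F1: "F1 \<subseteq> \<omega>" and F2: "F2 \<subseteq> \<omega>"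
  shows "(\<Sum>p\<in>{p\<in>Pow \<omega> \<times> Pow \<omega>. fst p \<union> snd p = \<omega> \<and> F1 \<subseteq> fst p \<and> F2 \<subseteq> snd p}.
           ((\<Prod>e\<in>F1. sinh (J e)) * (\<Prod>e\<in>fst p - F1. cosh (J e) - 1)) *
           ((\<Prod>e\<in>F2. sinh (J e)) * (\<Prod>e\<in>snd p - F2. cosh (J e) - 1)))
       = (1/2) ^ card \<omega> * ((\<Prod>e\<in>symdiff F1 F2. sinh (2 * J e)) * (\<Prod>e\<in>\<omega> - symdiff F1 F2. cosh (2 * J e) - 1))"
proof -
  let ?P = "{p\<in>Pow \<omega> \<times> Pow \<omega>. fst p \<union> snd p = \<omega> \<and> F1 \<subseteq> fst p \<and> F2 \<subseteq> snd p}"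
  define T where "T e = {(b1, b2). (b1 \<or> b2) \<and> (e \<in> F1 \<longrightarrow> b1) \<and> (e \<in> F2 \<longrightarrow> b2)}" for e :: "'v set"
  define u where "u F e b = (if e \<in> F then sinh (J e) else if b then cosh (J e) - 1 else 1)" for F e b
  define m where "m t = ({e\<in>\<omega>. fst (t e)}, {e\<in>\<omega>. snd (t e)})" for t :: "'v set \<Rightarrow> bool \<times> bool"
  have bij: "bij_betw m (PiE \<omega> T) ?P"
  proof (rule bij_betwI[where g = "\<lambda>p. restrict (\<lambda>e. (e \<in> fst p, e \<in> snd p)) \<omega>"])
    show "m \<in> PiE \<omega> T \<rightarrow> ?P"
    proof
      fix t assume t: "t \<in> PiE \<omega> T"
      have te: "t e \<in> T e" if "e \<in> \<omega>" for e using t that by auto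
      have "fst (t e) \<or> snd (t e)" if "e \<in> \<omega>" for e using te[OF that] unfolding T_def by (cases "t e") auto
      moreover have "fst (t e)" if "e \<in> F1" for e using te[of e] that F1 unfolding T_def by (cases "t e") auto
      moreover have "snd (t e)" if "e \<in> F2" for e using te[of e] that F2 unfolding T_def by (cases "t e") auto
      ultimately show "m t \<in> ?P" unfolding m_def using F1 F2 by auto
    qed
    show "(\<lambda>p. restrict (\<lambda>e. (e \<in> fst p, e \<in> snd p)) \<omega>) \<in> ?P \<rightarrow> PiE \<omega> T"
      unfolding T_def by auto
    show "restrict (\<lambda>e. (e \<in> fst (m t), e \<in> snd (m t))) \<omega> = t" if "t \<in> PiE \<omega> T" for t
    proof (rule PiE_ext[OF _ that])
      show "restrict (\<lambda>e. (e \<in> fst (m t), e \<in> snd (m t))) \<omega> \<in> PiE \<omega> T"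
        using that unfolding m_def by (auto simp: PiE_iff)
      show "restrict (\<lambda>e. (e \<in> fst (m t), e \<in> snd (m t))) \<omega> e = t e" if "e \<in> \<omega>" for e
        using that unfolding m_def by simp
    qed
    show "m (restrict (\<lambda>e. (e \<in> fst p, e \<in> snd p)) \<omega>) = p" if "p \<in> ?P" for p
      using that unfolding m_def by (cases p) auto
  qed
  have fT: "finite (T e)" for e by (rule finite_subset[of _ UNIV]) auto
  have "(\<Sum>p\<in>?P. ((\<Prod>e\<in>F1. sinh (J e)) * (\<Prod>e\<in>fst p - F1. cosh (J e) - 1)) *
           ((\<Prod>e\<in>F2. sinh (J e)) * (\<Prod>e\<in>snd p - F2. cosh (J e) - 1)))
      = (\<Sum>t\<in>PiE \<omega> T. ((\<Prod>e\<in>F1. sinh (J e)) * (\<Prod>e\<in>fst (m t) - F1. cosh (J e) - 1)) *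
           ((\<Prod>e\<in>F2. sinh (J e)) * (\<Prod>e\<in>snd (m t) - F2. cosh (J e) - 1)))"
    by (rule sum.reindex_bij_betw[OF bij, symmetric])
  also have "\<dots> = (\<Sum>t\<in>PiE \<omega> T. \<Prod>e\<in>\<omega>. u F1 e (fst (t e)) * u F2 e (snd (t e)))"
  proof (rule sum.cong[OF refl])
    fix t assume t: "t \<in> PiE \<omega> T"
    have mt: "m t \<in> ?P" using bij t unfolding bij_betw_def by auto
    have a: "(\<Prod>e\<in>F1. sinh (J e)) * (\<Prod>e\<in>fst (m t) - F1. cosh (J e) - 1) = (\<Prod>e\<in>\<omega>. u F1 e (fst (t e)))"
    proof -
      have "(\<Prod>e\<in>F1. sinh (J e)) * (\<Prod>e\<in>fst (m t) - F1. cosh (J e) - 1)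
          = (\<Prod>e\<in>\<omega>. if e \<in> F1 then sinh (J e) else if e \<in> fst (m t) then cosh (J e) - 1 else 1)"
        using mt by (intro w1_as_prod fo) auto
      also have "\<dots> = (\<Prod>e\<in>\<omega>. u F1 e (fst (t e)))"
        unfolding u_def m_def by (intro prod.cong) auto
      finally show ?thesis .
    qed
    have b: "(\<Prod>e\<in>F2. sinh (J e)) * (\<Prod>e\<in>snd (m t) - F2. cosh (J e) - 1) = (\<Prod>e\<in>\<omega>. u F2 e (snd (t e)))"
    proof -
      have "(\<Prod>e\<in>F2. sinh (J e)) * (\<Prod>e\<in>snd (m t) - F2. cosh (J e) - 1)
          = (\<Prod>e\<in>\<omega>. if e \<in> F2 then sinh (J e) else if e \<in> snd (m t) then cosh (J e) - 1 else 1)"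
        using mt by (intro w1_as_prod fo) auto
      also have "\<dots> = (\<Prod>e\<in>\<omega>. u F2 e (snd (t e)))"
        unfolding u_def m_def by (intro prod.cong) auto
      finally show ?thesis .
    qed
    show "((\<Prod>e\<in>F1. sinh (J e)) * (\<Prod>e\<in>fst (m t) - F1. cosh (J e) - 1)) *
           ((\<Prod>e\<in>F2. sinh (J e)) * (\<Prod>e\<in>snd (m t) - F2. cosh (J e) - 1))
        = (\<Prod>e\<in>\<omega>. u F1 e (fst (t e)) * u F2 e (snd (t e)))"
      unfolding a b by (rule prod.distrib[symmetric])
  qed
  also have "\<dots> = (\<Prod>e\<in>\<omega>. \<Sum>a\<in>T e. u F1 e (fst a) * u F2 e (snd a))"
    by (rule prod_sum_PiE[symmetric]) (use fo fT in auto)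
  also have "\<dots> = (\<Prod>e\<in>\<omega>. (1/2) * (if e \<in> symdiff F1 F2 then sinh (2 * J e) else cosh (2 * J e) - 1))"
  proof (rule prod.cong[OF refl])
    fix e
    have T1: "T e = {(True, True)}" if "e \<in> F1" "e \<in> F2" using that unfolding T_def by auto
    have T2: "T e = {(True, False), (True, True)}" if "e \<in> F1" "e \<notin> F2" using that unfolding T_def by auto
    have T3: "T e = {(False, True), (True, True)}" if "e \<notin> F1" "e \<in> F2" using that unfolding T_def by auto
    have T4: "T e = {(True, False), (False, True), (True, True)}" if "e \<notin> F1" "e \<notin> F2" using that unfolding T_def by auto
    have sd: "e \<in> symdiff F1 F2 \<longleftrightarrow> (e \<in> F1) \<noteq> (e \<in> F2)" unfolding symdiff_def by auto
    show "(\<Sum>a\<in>T e. u F1 e (fst a) * u F2 e (snd a))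
        = (1/2) * (if e \<in> symdiff F1 F2 then sinh (2 * J e) else cosh (2 * J e) - 1)"
    proof (cases "e \<in> F1"; cases "e \<in> F2")
      assume "e \<in> F1" "e \<in> F2"
      then show ?thesis unfolding T1[OF \<open>e \<in> F1\<close> \<open>e \<in> F2\<close>] u_def
        using edge_pair_sum(1)[of "e \<in> F1" "e \<in> F2" "J e"] sd by simp
    next
      assume "e \<in> F1" "e \<notin> F2"
      then show ?thesis unfolding T2[OF \<open>e \<in> F1\<close> \<open>e \<notin> F2\<close>] u_def
        using edge_pair_sum(2)[of "e \<in> F1" "e \<in> F2" "J e"] sd by simp
    next
      assume "e \<notin> F1" "e \<in> F2"
      then show ?thesis unfolding T3[OF \<open>e \<notin> F1\<close> \<open>e \<in> F2\<close>] u_def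
        using edge_pair_sum(3)[of "e \<in> F1" "e \<in> F2" "J e"] sd by simp
    next
      assume "e \<notin> F1" "e \<notin> F2"
      then show ?thesis unfolding T4[OF \<open>e \<notin> F1\<close> \<open>e \<notin> F2\<close>] u_def
        using edge_pair_sum(4)[of "e \<in> F1" "e \<in> F2" "J e"] sd by simp
    qed
  qed
  also have "\<dots> = (1/2) ^ card \<omega> * (\<Prod>e\<in>\<omega>. if e \<in> symdiff F1 F2 then sinh (2 * J e) else cosh (2 * J e) - 1)"
    by (simp only: prod.distrib prod_constant)
  also have "(\<Prod>e\<in>\<omega>. if e \<in> symdiff F1 F2 then sinh (2 * J e) else cosh (2 * J e) - 1)
      = (\<Prod>e\<in>symdiff F1 F2. sinh (2 * J e)) * (\<Prod>e\<in>\<omega> - symdiff F1 F2. cosh (2 * J e) - 1)"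
  proof -
    have "(\<Prod>e\<in>\<omega>. if e \<in> symdiff F1 F2 then sinh (2 * J e) else cosh (2 * J e) - 1)
        = (\<Prod>e\<in>\<omega> \<inter> {x. x \<in> symdiff F1 F2}. sinh (2 * J e)) * (\<Prod>e\<in>\<omega> \<inter> - {x. x \<in> symdiff F1 F2}. cosh (2 * J e) - 1)"
      by (rule prod.If_cases[OF fo])
    moreover have "\<omega> \<inter> {x. x \<in> symdiff F1 F2} = symdiff F1 F2" using F1 F2 unfolding symdiff_def by auto
    moreover have "\<omega> \<inter> - {x. x \<in> symdiff F1 F2} = \<omega> - symdiff F1 F2" by auto
    ultimately show ?thesis by simp
  qed
  finally show ?thesis .
qed

end


context gr begin

lemma Pf_as_sum:
  assumes "finite \<omega>" "X \<subseteq> \<omega>"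
  shows "Pf V J A X = (\<Sum>F\<in>Pow \<omega>. if F \<subseteq> X \<and> bdry V F = A then (\<Prod>e\<in>F. sinh (J e)) * (\<Prod>e\<in>X - F. cosh (J e) - 1) else 0)"
proof -
  have "{F\<in>Pow X. bdry V F = A} = {F\<in>Pow \<omega>. F \<subseteq> X \<and> bdry V F = A}" using assms by auto
  then have "Pf V J A X = (\<Sum>F\<in>{F\<in>Pow \<omega>. F \<subseteq> X \<and> bdry V F = A}. (\<Prod>e\<in>F. sinh (J e)) * (\<Prod>e\<in>X - F. cosh (J e) - 1))"
    unfolding Pf_def by simp
  also have "\<dots> = (\<Sum>F\<in>Pow \<omega>. if F \<subseteq> X \<and> bdry V F = A then (\<Prod>e\<in>F. sinh (J e)) * (\<Prod>e\<in>X - F. cosh (J e) - 1) else 0)"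
    using assms by (intro sum.inter_filter) simp
  finally show ?thesis .
qed

lemma reindex_symdiff:
  assumes fo: "finite \<omega>" and F1: "F1 \<subseteq> \<omega>" "bdry V F1 = A"
  shows "(\<Sum>F2\<in>{F\<in>Pow \<omega>. bdry V F = B}. g (symdiff F1 F2)) = (\<Sum>F\<in>{F\<in>Pow \<omega>. bdry V F = symdiff A B}. g F)"
proof (rule sum.reindex_bij_betw)
  have fin: "F \<subseteq> \<omega> \<Longrightarrow> finite F" for F using fo finite_subset by blast
  show "bij_betw (symdiff F1) {F\<in>Pow \<omega>. bdry V F = B} {F\<in>Pow \<omega>. bdry V F = symdiff A B}"
  proof (rule bij_betwI[where g = "symdiff F1"])
    show "symdiff F1 \<in> {F\<in>Pow \<omega>. bdry V F = B} \<rightarrow> {F\<in>Pow \<omega>. bdry V F = symdiff A B}"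
    proof
      fix F assume F: "F \<in> {F\<in>Pow \<omega>. bdry V F = B}"
      then have "bdry V (symdiff F1 F) = symdiff A B" using bdry_symdiff[OF fin fin] F1 by auto
      then show "symdiff F1 F \<in> {F\<in>Pow \<omega>. bdry V F = symdiff A B}" using F F1 by (auto simp: symdiff_def)
    qed
    show "symdiff F1 \<in> {F\<in>Pow \<omega>. bdry V F = symdiff A B} \<rightarrow> {F\<in>Pow \<omega>. bdry V F = B}"
    proof
      fix F assume F: "F \<in> {F\<in>Pow \<omega>. bdry V F = symdiff A B}"
      then have "bdry V (symdiff F1 F) = symdiff A (symdiff A B)" using bdry_symdiff[OF fin fin] F1 by auto
      then show "symdiff F1 F \<in> {F\<in>Pow \<omega>. bdry V F = B}" using F F1 by (auto simp: symdiff_def)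
    qed
  qed (auto simp: symdiff_invol)
qed

lemma DD:
  fixes J :: "'v set \<Rightarrow> real"
  assumes oE: "\<omega> \<subseteq> E"
  shows "(\<Sum>p\<in>{p\<in>Pow E \<times> Pow E. fst p \<union> snd p = \<omega>}. Pf V J A (fst p) * Pf V J B (snd p))
    = (if \<omega> \<in> FA V E A then Pf V (\<lambda>e. 2 * J e) (symdiff A B) \<omega> else 0) * real (card (fmap V E \<omega>)) / real (card (spins V))"
proof -
  have fo: "finite \<omega>" using finite_Pow_sub[OF oE] .
  define w1 where "w1 X F = (\<Prod>e\<in>F. sinh (J e)) * (\<Prod>e\<in>X - F. cosh (J e) - 1)" for X F
  define W2 where "W2 F = (\<Prod>e\<in>F. sinh (2 * J e)) * (\<Prod>e\<in>\<omega> - F. cosh (2 * J e) - 1)" for F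
  define g where "g p F1 F2 = (if F1 \<subseteq> fst p \<and> bdry V F1 = A then w1 (fst p) F1 else 0) *
                              (if F2 \<subseteq> snd p \<and> bdry V F2 = B then w1 (snd p) F2 else 0)" for p F1 F2
  let ?P0 = "{p\<in>Pow \<omega> \<times> Pow \<omega>. fst p \<union> snd p = \<omega>}"
  have S0: "{p\<in>Pow E \<times> Pow E. fst p \<union> snd p = \<omega>} = ?P0" using oE by auto
  have fP0: "finite ?P0" using fo by simp
  have "(\<Sum>p\<in>?P0. Pf V J A (fst p) * Pf V J B (snd p)) = (\<Sum>p\<in>?P0. \<Sum>F1\<in>Pow \<omega>. \<Sum>F2\<in>Pow \<omega>. g p F1 F2)"
  proof (rule sum.cong[OF refl])
    fix p assume p: "p \<in> ?P0"
    have "Pf V J A (fst p) * Pf V J B (snd p)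
        = (\<Sum>F1\<in>Pow \<omega>. if F1 \<subseteq> fst p \<and> bdry V F1 = A then w1 (fst p) F1 else 0) *
          (\<Sum>F2\<in>Pow \<omega>. if F2 \<subseteq> snd p \<and> bdry V F2 = B then w1 (snd p) F2 else 0)"
      unfolding w1_def using Pf_as_sum[OF fo, of "fst p" J A] Pf_as_sum[OF fo, of "snd p" J B] p by auto
    also have "\<dots> = (\<Sum>F1\<in>Pow \<omega>. \<Sum>F2\<in>Pow \<omega>. g p F1 F2)"
      unfolding g_def by (rule sum_product)
    finally show "Pf V J A (fst p) * Pf V J B (snd p) = (\<Sum>F1\<in>Pow \<omega>. \<Sum>F2\<in>Pow \<omega>. g p F1 F2)" .
  qed
  also have "\<dots> = (\<Sum>F1\<in>Pow \<omega>. \<Sum>p\<in>?P0. \<Sum>F2\<in>Pow \<omega>. g p F1 F2)"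
    by (rule sum.swap)
  also have "\<dots> = (\<Sum>F1\<in>Pow \<omega>. \<Sum>F2\<in>Pow \<omega>. \<Sum>p\<in>?P0. g p F1 F2)"
    by (intro sum.cong refl sum.swap)
  also have "\<dots> = (\<Sum>F1\<in>Pow \<omega>. \<Sum>F2\<in>Pow \<omega>. if bdry V F1 = A \<and> bdry V F2 = B then (1/2) ^ card \<omega> * W2 (symdiff F1 F2) else 0)"
  proof (intro sum.cong refl)
    fix F1 F2 assume F1: "F1 \<in> Pow \<omega>" and F2: "F2 \<in> Pow \<omega>"
    show "(\<Sum>p\<in>?P0. g p F1 F2) = (if bdry V F1 = A \<and> bdry V F2 = B then (1/2) ^ card \<omega> * W2 (symdiff F1 F2) else 0)"
    proof (cases "bdry V F1 = A \<and> bdry V F2 = B")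
      case False
      then have "g p F1 F2 = 0" for p unfolding g_def by auto
      then have "(\<Sum>p\<in>?P0. g p F1 F2) = 0" by simp
      then show ?thesis using False by (simp only: if_False)
    next
      case True
      have "(\<Sum>p\<in>?P0. g p F1 F2) = (\<Sum>p\<in>?P0. if F1 \<subseteq> fst p \<and> F2 \<subseteq> snd p then w1 (fst p) F1 * w1 (snd p) F2 else 0)"
        unfolding g_def using True by (intro sum.cong) auto
      also have "\<dots> = (\<Sum>p\<in>{p\<in>?P0. F1 \<subseteq> fst p \<and> F2 \<subseteq> snd p}. w1 (fst p) F1 * w1 (snd p) F2)"
        by (rule sum.inter_filter[OF fP0, symmetric])
      also have "{p\<in>?P0. F1 \<subseteq> fst p \<and> F2 \<subseteq> snd p} = {p\<in>Pow \<omega> \<times> Pow \<omega>. fst p \<union> snd p = \<omega> \<and> F1 \<subseteq> fst p \<and> F2 \<subseteq> snd p}"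
        by auto
      also have "(\<Sum>p\<in>{p\<in>Pow \<omega> \<times> Pow \<omega>. fst p \<union> snd p = \<omega> \<and> F1 \<subseteq> fst p \<and> F2 \<subseteq> snd p}. w1 (fst p) F1 * w1 (snd p) F2)
          = (1/2) ^ card \<omega> * W2 (symdiff F1 F2)"
        unfolding w1_def W2_def using pair_sum[OF fo, of F1 F2 J] F1 F2 by simp
      finally show ?thesis using True by simp
    qed
  qed
  also have "\<dots> = (\<Sum>F1\<in>Pow \<omega>. if bdry V F1 = A then (1/2) ^ card \<omega> * Pf V (\<lambda>e. 2 * J e) (symdiff A B) \<omega> else 0)"
  proof (rule sum.cong[OF refl])
    fix F1 assume F1: "F1 \<in> Pow \<omega>"
    show "(\<Sum>F2\<in>Pow \<omega>. if bdry V F1 = A \<and> bdry V F2 = B then (1/2) ^ card \<omega> * W2 (symdiff F1 F2) else 0)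
        = (if bdry V F1 = A then (1/2) ^ card \<omega> * Pf V (\<lambda>e. 2 * J e) (symdiff A B) \<omega> else 0)"
    proof (cases "bdry V F1 = A")
      case False then show ?thesis by simp
    next
      case True
      have "(\<Sum>F2\<in>Pow \<omega>. if bdry V F1 = A \<and> bdry V F2 = B then (1/2) ^ card \<omega> * W2 (symdiff F1 F2) else 0)
          = (\<Sum>F2\<in>{F\<in>Pow \<omega>. bdry V F = B}. (1/2) ^ card \<omega> * W2 (symdiff F1 F2))"
        using True fo by (simp add: sum.inter_filter[of "Pow \<omega>", symmetric])
      also have "\<dots> = (\<Sum>F\<in>{F\<in>Pow \<omega>. bdry V F = symdiff A B}. (1/2) ^ card \<omega> * W2 F)"
        using reindex_symdiff[OF fo _ True, of "\<lambda>F. (1/2) ^ card \<omega> * W2 F" B] F1 by simp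
      also have "\<dots> = (1/2) ^ card \<omega> * Pf V (\<lambda>e. 2 * J e) (symdiff A B) \<omega>"
        unfolding Pf_def W2_def by (simp add: sum_distrib_left)
      finally show ?thesis using True by simp
    qed
  qed
  also have "\<dots> = real (card {F1\<in>Pow \<omega>. bdry V F1 = A}) * ((1/2) ^ card \<omega> * Pf V (\<lambda>e. 2 * J e) (symdiff A B) \<omega>)"
    using fo by (simp add: sum.inter_filter[of "Pow \<omega>", symmetric])
  also have "\<dots> = (if \<omega> \<in> FA V E A then Pf V (\<lambda>e. 2 * J e) (symdiff A B) \<omega> else 0) * real (card (fmap V E \<omega>)) / real (card (spins V))"
  proof -
    have N: "real (card (spins V)) * real (card {F\<in>Pow \<omega>. bdry V F = {}}) = 2 ^ card \<omega> * real (card (fmap V E \<omega>))"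
      by (rule count_even[OF oE])
    have pos: "real (card (spins V)) > 0" using card_spins_pos[OF finV] by simp
    have h: "real (card {F\<in>Pow \<omega>. bdry V F = {}}) * (1/2) ^ card \<omega> = real (card (fmap V E \<omega>)) / real (card (spins V))"
    proof -
      have "real (card {F\<in>Pow \<omega>. bdry V F = {}}) = 2 ^ card \<omega> * real (card (fmap V E \<omega>)) / real (card (spins V))"
        using N pos by (simp add: field_simps)
      then show ?thesis by (simp add: power_one_over field_simps)
    qed
    show ?thesis
    proof (cases "\<omega> \<in> FA V E A")
      case True
      have cA: "card {F1\<in>Pow \<omega>. bdry V F1 = A} = card {F\<in>Pow \<omega>. bdry V F = {}}"
        using count_A[OF oE, of A] True by simp
      have "real (card {F1\<in>Pow \<omega>. bdry V F1 = A}) * ((1/2) ^ card \<omega> * Pf V (\<lambda>e. 2 * J e) (symdiff A B) \<omega>)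
          = (real (card {F\<in>Pow \<omega>. bdry V F = {}}) * (1/2) ^ card \<omega>) * Pf V (\<lambda>e. 2 * J e) (symdiff A B) \<omega>"
        unfolding cA by (rule mult.assoc[symmetric])
      also have "\<dots> = real (card (fmap V E \<omega>)) / real (card (spins V)) * Pf V (\<lambda>e. 2 * J e) (symdiff A B) \<omega>"
        unfolding h ..
      finally show ?thesis using True by simp
    next
      case False
      then show ?thesis unfolding count_A[OF oE, of A] by simp
    qed
  qed
  finally show ?thesis unfolding S0 .
qed

end


definition gfun :: "'v set \<Rightarrow> 'v set set \<Rightarrow> ('v set \<Rightarrow> real) \<Rightarrow> 'v set \<Rightarrow> 'v set \<Rightarrow> 'v set set \<Rightarrow> real" where
  "gfun V E J A B \<omega> = (if \<omega> \<in> FA V E A then Pf V (\<lambda>e. 2 * J e) (symdiff A B) \<omega> else 0)"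

definition Dsum :: "'v set \<Rightarrow> 'v set set \<Rightarrow> ('v set \<Rightarrow> real) \<Rightarrow> 'v set \<Rightarrow> 'v set \<Rightarrow> real" where
  "Dsum V E J A B = (\<Sum>\<omega>\<in>Pow E. gfun V E J A B \<omega> * real (card (fmap V E \<omega>)))"

definition Gfun :: "'v set \<Rightarrow> 'v set set \<Rightarrow> ('v set \<Rightarrow> real) \<Rightarrow> 'v set \<Rightarrow> 'v set \<Rightarrow> ('v \<Rightarrow> real) \<Rightarrow> real" where
  "Gfun V E J A B \<sigma> = (\<Sum>\<omega>\<in>Pow E. gfun V E J A B \<omega> * (if \<sigma> \<in> fmap V E \<omega> then 1 else 0))"

locale pcfg = gr +
  fixes J :: "'v set \<Rightarrow> real" and A B :: "'v set"
  assumes Jpos: "\<forall>e\<in>E. J e > 0" and AV: "A \<subseteq> V" and BV: "B \<subseteq> V"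
begin

abbreviation "K2 \<equiv> (\<lambda>e. 2 * J e)"
abbreviation "C \<equiv> symdiff A B"
abbreviation "g \<equiv> gfun V E J A B"
abbreviation "Sg \<equiv> (\<Sum>\<omega>\<in>Pow E. g \<omega>)"
abbreviation "D \<equiv> Dsum V E J A B"
abbreviation "Nsp \<equiv> real (card (spins V))"

lemma CV: "C \<subseteq> V" using AV BV unfolding symdiff_def by auto

lemma K2nn: "H \<subseteq> E \<Longrightarrow> e \<in> H \<Longrightarrow> K2 e \<ge> 0"
  using Jpos by (auto intro: less_imp_le)

lemma K2nnE: "e \<in> E \<Longrightarrow> K2 e \<ge> 0"
  using Jpos by (auto intro: less_imp_le)

lemma Pf2_nn: "\<omega> \<subseteq> E \<Longrightarrow> Pf V K2 C \<omega> \<ge> 0"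
  by (rule Pf_nonneg) (use K2nn in auto)

lemma g_nn: "\<omega> \<subseteq> E \<Longrightarrow> g \<omega> \<ge> 0"
  unfolding gfun_def using Pf2_nn by auto

lemma Sg_nn: "Sg \<ge> 0" using g_nn by (intro sum_nonneg) auto

lemma Sg_zero: "Sg = 0 \<Longrightarrow> \<omega> \<subseteq> E \<Longrightarrow> g \<omega> = 0"
  using sum_nonneg_eq_0_iff[of "Pow E" g] finE g_nn by auto

lemma sum_fmap_ind: "(\<Sum>\<sigma>\<in>spins V. if \<sigma> \<in> fmap V E \<omega> then c else 0) = c * real (card (fmap V E \<omega>))"
proof -
  have "(\<Sum>\<sigma>\<in>spins V. if \<sigma> \<in> fmap V E \<omega> then c else 0) = (\<Sum>\<sigma>\<in>{\<sigma>\<in>spins V. \<sigma> \<in> fmap V E \<omega>}. c)"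
    using finite_spins[OF finV] by (intro sum.inter_filter[symmetric])
  also have "{\<sigma>\<in>spins V. \<sigma> \<in> fmap V E \<omega>} = fmap V E \<omega>" unfolding fmap_def by auto
  finally show ?thesis by simp
qed

lemma rc_cond_E:
  assumes "\<omega> \<subseteq> E"
  shows "rc_cond V E E K2 C (FA V E A) \<omega> = g \<omega> / Sg"
proof -
  define Q where "Q = Qc V E K2 C"
  have rp: "rc_prob V E K2 C X = Pf V K2 C X / Q" if "X \<subseteq> E" for X
    unfolding Q_def using rc_prob_closed[OF order_refl K2nnE, where C = "symdiff A B" and \<omega> = X] that by simp
  have ev: "rc_event V E E K2 C (FA V E A) = Sg / Q"
  proof -
    have "rc_event V E E K2 C (FA V E A) = (\<Sum>\<omega>\<in>Pow E \<inter> FA V E A. Pf V K2 C \<omega> / Q)"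
      unfolding rc_event_def using rp by (intro sum.cong) auto
    also have "\<dots> = (\<Sum>\<omega>\<in>Pow E. if \<omega> \<in> FA V E A then Pf V K2 C \<omega> / Q else 0)"
      using finE by (intro sum.inter_restrict) simp
    also have "\<dots> = (\<Sum>\<omega>\<in>Pow E. g \<omega> / Q)" by (intro sum.cong) (auto simp: gfun_def)
    also have "\<dots> = Sg / Q" by (rule sum_divide_distrib[symmetric])
    finally show ?thesis .
  qed
  have num: "(if \<omega> \<in> FA V E A then rc_prob V E K2 C \<omega> else 0) = g \<omega> / Q"
    using rp[OF assms] unfolding gfun_def by simp
  show ?thesis
  proof (cases "Q = 0")
    case True
    have "Sg = 0"
    proof -
      have "(\<Sum>\<omega>\<in>Pow E. Pf V K2 C \<omega>) = 0" using sum_Pf[of E K2 C] True unfolding Q_def by simp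
      then have "\<forall>\<omega>\<in>Pow E. Pf V K2 C \<omega> = 0" using sum_nonneg_eq_0_iff[of "Pow E" "Pf V K2 C"] finE Pf2_nn by auto
      then show ?thesis unfolding gfun_def by (intro sum.neutral) auto
    qed
    then show ?thesis unfolding rc_cond_def num ev using True by simp
  next
    case False
    then show ?thesis unfolding rc_cond_def num ev by simp
  qed
qed

lemma rho_eq:
  assumes "\<omega> \<subseteq> E"
  shows "rho V E J A B \<omega> = g \<omega> / Sg"
proof -
  have "(\<Sum>\<omega>'\<in>Pow E. rc_cond V E E K2 C (FA V E A) \<omega>') = (\<Sum>\<omega>'\<in>Pow E. g \<omega>' / Sg)"
    by (intro sum.cong) (auto simp: rc_cond_E)
  also have "\<dots> = Sg / Sg" by (rule sum_divide_distrib[symmetric])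
  finally have s: "(\<Sum>\<omega>'\<in>Pow E. rc_cond V E E K2 C (FA V E A) \<omega>') = Sg / Sg" .
  show ?thesis unfolding rho_def s rc_cond_E[OF assms] by (cases "Sg = 0") simp_all
qed

lemma coupling_eq:
  assumes "\<omega> \<subseteq> E"
  shows "coupling V E J A B \<omega> \<sigma> = g \<omega> * (if \<sigma> \<in> fmap V E \<omega> then 1 else 0) / D"
proof -
  define \<gamma> where "\<gamma> = 1 / Nsp"
  have \<gamma>: "\<gamma> > 0" unfolding \<gamma>_def using card_spins_pos[OF finV] by simp
  have cw: "coupling_weight V E J A B \<omega>' \<sigma>' = g \<omega>' / Sg * \<gamma> * (if \<sigma>' \<in> fmap V E \<omega>' then 1 else 0)"
    if "\<omega>' \<subseteq> E" for \<omega>' \<sigma>'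
    unfolding coupling_weight_def gamma_unif_def \<gamma>_def rho_eq[OF that] by simp
  have T: "(\<Sum>p\<in>Pow E \<times> spins V. coupling_weight V E J A B (fst p) (snd p)) = \<gamma> / Sg * D"
  proof -
    have "(\<Sum>p\<in>Pow E \<times> spins V. coupling_weight V E J A B (fst p) (snd p))
        = (\<Sum>\<omega>'\<in>Pow E. \<Sum>\<sigma>'\<in>spins V. coupling_weight V E J A B \<omega>' \<sigma>')"
      by (simp add: sum.cartesian_product case_prod_unfold)
    also have "\<dots> = (\<Sum>\<omega>'\<in>Pow E. \<Sum>\<sigma>'\<in>spins V. if \<sigma>' \<in> fmap V E \<omega>' then g \<omega>' / Sg * \<gamma> else 0)"
      using cw by (intro sum.cong) auto
    also have "\<dots> = (\<Sum>\<omega>'\<in>Pow E. g \<omega>' / Sg * \<gamma> * real (card (fmap V E \<omega>')))"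
      by (simp only: sum_fmap_ind)
    also have "\<dots> = \<gamma> / Sg * D"
      unfolding Dsum_def by (simp add: sum_distrib_left ac_simps)
    finally show ?thesis .
  qed
  show ?thesis
  proof (cases "Sg = 0")
    case True
    then show ?thesis unfolding coupling_def cw[OF assms] using Sg_zero[OF True assms] by simp
  next
    case False
    then show ?thesis unfolding coupling_def cw[OF assms] T using \<gamma>
      by (cases "D = 0") (simp_all add: field_simps)
  qed
qed

end


context pcfg begin

abbreviation "S \<sigma> \<equiv> agree_edges E \<sigma>"

lemma W1:
  "ising_corr V (S \<sigma>) K2 C = Nsp * Qc V (S \<sigma>) K2 C / ising_Z V (S \<sigma>) K2"
proof -
  have "ising_corr V (S \<sigma>) K2 C = (\<Sum>\<tau>\<in>spins V. (\<Prod>x\<in>C. \<tau> x) * ising_weight (S \<sigma>) K2 \<tau> / ising_Z V (S \<sigma>) K2)"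
    unfolding ising_corr_def ising_mu_def by simp
  also have "\<dots> = (\<Sum>\<tau>\<in>spins V. (\<Prod>x\<in>C. \<tau> x) * ising_weight (S \<sigma>) K2 \<tau>) / ising_Z V (S \<sigma>) K2"
    by (rule sum_divide_distrib[symmetric])
  also have "\<dots> = Nsp * Qc V (S \<sigma>) K2 C / ising_Z V (S \<sigma>) K2"
    using ising_corr_sum[OF agree_sub CV] by simp
  finally show ?thesis .
qed

lemma W2:
  assumes \<sigma>: "\<sigma> \<in> spins V"
  shows "rc_event V E (S \<sigma>) K2 C (FA V E A) = Gfun V E J A B \<sigma> / Qc V (S \<sigma>) K2 C"
proof -
  define Q where "Q = Qc V (S \<sigma>) K2 C"
  have Kp: "\<And>e. e \<in> S \<sigma> \<Longrightarrow> K2 e \<ge> 0" using agree_sub K2nnE by blast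
  have rp: "rc_prob V (S \<sigma>) K2 C X = (if X \<subseteq> S \<sigma> then Pf V K2 C X else 0) / Q" for X
    unfolding Q_def by (rule rc_prob_closed[OF agree_sub Kp])
  have "rc_event V E (S \<sigma>) K2 C (FA V E A) = (\<Sum>\<omega>\<in>Pow E \<inter> FA V E A. (if \<omega> \<subseteq> S \<sigma> then Pf V K2 C \<omega> else 0) / Q)"
    unfolding rc_event_def rp ..
  also have "\<dots> = (\<Sum>\<omega>\<in>Pow E. if \<omega> \<in> FA V E A then (if \<omega> \<subseteq> S \<sigma> then Pf V K2 C \<omega> else 0) / Q else 0)"
    using finE by (intro sum.inter_restrict) simp
  also have "\<dots> = (\<Sum>\<omega>\<in>Pow E. g \<omega> * (if \<sigma> \<in> fmap V E \<omega> then 1 else 0) / Q)"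
    by (intro sum.cong) (auto simp: gfun_def fmap_iff \<sigma>)
  also have "\<dots> = Gfun V E J A B \<sigma> / Q"
    unfolding Gfun_def by (rule sum_divide_distrib[symmetric])
  finally show ?thesis unfolding Q_def .
qed

lemma W3:
  assumes \<sigma>: "\<sigma> \<in> spins V"
  shows "mu_xor V E J \<sigma> = ising_Z V (S \<sigma>) K2 / (ising_Z V E J)^2"
proof -
  let ?P = "{p\<in>spins V \<times> spins V. (\<lambda>v. fst p v * snd p v) = \<sigma>}"
  define ZJ where "ZJ = ising_Z V E J"
  have bij: "bij_betw (\<lambda>\<tau>. (\<tau>, \<lambda>v. \<tau> v * \<sigma> v)) (spins V) ?P"
  proof (rule bij_betwI[where g = fst])
    show "(\<lambda>\<tau>. (\<tau>, \<lambda>v. \<tau> v * \<sigma> v)) \<in> spins V \<rightarrow> ?P"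
    proof
      fix \<tau> assume \<tau>: "\<tau> \<in> spins V"
      have "(\<lambda>v. \<tau> v * \<sigma> v) \<in> spins V"
        using \<tau> \<sigma> spins_val[OF \<tau>] spins_val[OF \<sigma>] unfolding spins_def by fastforce
      moreover have "(\<lambda>v. \<tau> v * (\<tau> v * \<sigma> v)) = \<sigma>"
      proof
        fix v show "\<tau> v * (\<tau> v * \<sigma> v) = \<sigma> v" using spins_sq[OF \<tau>, of v] by (simp add: mult.assoc[symmetric])
      qed
      ultimately show "(\<tau>, \<lambda>v. \<tau> v * \<sigma> v) \<in> ?P" using \<tau> by simp
    qed
    show "fst \<in> ?P \<rightarrow> spins V" by auto
    show "fst (\<tau>, \<lambda>v. \<tau> v * \<sigma> v) = \<tau>" for \<tau> by simp
    show "(fst p, \<lambda>v. fst p v * \<sigma> v) = p" if "p \<in> ?P" for p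
    proof -
      obtain a b where p: "p = (a, b)" by (cases p)
      have a: "a \<in> spins V" and ab: "(\<lambda>v. a v * b v) = \<sigma>" using that p by auto
      have "(\<lambda>v. a v * \<sigma> v) = b"
      proof
        fix v
        have "a v * \<sigma> v = a v * (a v * b v)" using ab by auto
        also have "\<dots> = b v" using spins_sq[OF a, of v] by (simp add: mult.assoc[symmetric])
        finally show "a v * \<sigma> v = b v" .
      qed
      then show ?thesis using p by simp
    qed
  qed
  have ww: "ising_weight E J \<tau> * ising_weight E J (\<lambda>v. \<tau> v * \<sigma> v) = ising_weight (S \<sigma>) K2 \<tau>" if \<tau>: "\<tau> \<in> spins V" for \<tau>
  proof -
    have "ising_weight E J \<tau> * ising_weight E J (\<lambda>v. \<tau> v * \<sigma> v)
        = exp (\<Sum>e\<in>E. J e * (\<Prod>x\<in>e. \<tau> x) + J e * (\<Prod>x\<in>e. \<tau> x * \<sigma> x))"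
      unfolding ising_weight_def by (simp add: exp_add[symmetric] sum.distrib)
    also have "(\<Sum>e\<in>E. J e * (\<Prod>x\<in>e. \<tau> x) + J e * (\<Prod>x\<in>e. \<tau> x * \<sigma> x))
        = (\<Sum>e\<in>E. if e \<in> S \<sigma> then K2 e * (\<Prod>x\<in>e. \<tau> x) else 0)"
    proof (rule sum.cong[OF refl])
      fix e assume e: "e \<in> E"
      have "(\<Prod>x\<in>e. \<tau> x * \<sigma> x) = (\<Prod>x\<in>e. \<tau> x) * (\<Prod>x\<in>e. \<sigma> x)" by (rule prod.distrib)
      then show "J e * (\<Prod>x\<in>e. \<tau> x) + J e * (\<Prod>x\<in>e. \<tau> x * \<sigma> x) = (if e \<in> S \<sigma> then K2 e * (\<Prod>x\<in>e. \<tau> x) else 0)"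
        using edge_val[OF e \<sigma>] by auto
    qed
    also have "\<dots> = (\<Sum>e\<in>E \<inter> S \<sigma>. K2 e * (\<Prod>x\<in>e. \<tau> x))"
      using finE by (intro sum.inter_restrict[symmetric])
    also have "E \<inter> S \<sigma> = S \<sigma>" using agree_sub by auto
    finally show ?thesis unfolding ising_weight_def by simp
  qed
  have "mu_xor V E J \<sigma> = (\<Sum>\<tau>\<in>spins V. ising_mu V E J \<tau> * ising_mu V E J (\<lambda>v. \<tau> v * \<sigma> v))"
    unfolding mu_xor_def using sum.reindex_bij_betw[OF bij, of "\<lambda>p. ising_mu V E J (fst p) * ising_mu V E J (snd p)"]
    by simp
  also have "\<dots> = (\<Sum>\<tau>\<in>spins V. ising_weight (S \<sigma>) K2 \<tau> / ZJ^2)"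
    by (intro sum.cong refl) (simp add: ising_mu_def ZJ_def ww[symmetric] power2_eq_square)
  also have "\<dots> = ising_Z V (S \<sigma>) K2 / ZJ^2"
    unfolding ising_Z_def by (rule sum_divide_distrib[symmetric])
  finally show ?thesis unfolding ZJ_def .
qed

lemma muAB_weight_eq:
  assumes \<sigma>: "\<sigma> \<in> spins V"
  shows "muAB_weight V E J A B \<sigma> = Nsp / (ising_Z V E J)^2 * Gfun V E J A B \<sigma>"
proof -
  define Q where "Q = Qc V (S \<sigma>) K2 C"
  define ZS where "ZS = ising_Z V (S \<sigma>) K2"
  have ZS: "ZS > 0" unfolding ZS_def by (rule ising_Z_pos)
  have m: "muAB_weight V E J A B \<sigma> = (Nsp * Q / ZS) * (Gfun V E J A B \<sigma> / Q) * (ZS / (ising_Z V E J)^2)"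
    unfolding muAB_weight_def W1 W2[OF \<sigma>] W3[OF \<sigma>] Q_def ZS_def ..
  show ?thesis
  proof (cases "Q = 0")
    case True
    have G0: "Gfun V E J A B \<sigma> = 0"
    proof -
      have "(\<Sum>\<omega>\<in>Pow (S \<sigma>). Pf V K2 C \<omega>) = 0" using sum_Pf[of "S \<sigma>" K2 C, OF agree_sub] True unfolding Q_def by simp
      moreover have "finite (Pow (S \<sigma>))" using finite_Pow_sub[OF agree_sub] by simp
      moreover have "\<forall>\<omega>\<in>Pow (S \<sigma>). Pf V K2 C \<omega> \<ge> 0" using Pf2_nn agree_sub by blast
      ultimately have z: "\<forall>\<omega>\<in>Pow (S \<sigma>). Pf V K2 C \<omega> = 0" using sum_nonneg_eq_0_iff by blast
      show ?thesis unfolding Gfun_def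
        by (intro sum.neutral) (auto simp: gfun_def fmap_iff z)
    qed
    show ?thesis unfolding m G0 by simp
  next
    case False
    then show ?thesis unfolding m using ZS by (simp add: field_simps)
  qed
qed

lemma sum_Gfun: "(\<Sum>\<sigma>\<in>spins V. Gfun V E J A B \<sigma>) = D"
proof -
  have "(\<Sum>\<sigma>\<in>spins V. Gfun V E J A B \<sigma>) = (\<Sum>\<omega>\<in>Pow E. \<Sum>\<sigma>\<in>spins V. if \<sigma> \<in> fmap V E \<omega> then g \<omega> else 0)"
    unfolding Gfun_def by (subst sum.swap) (intro sum.cong refl; simp)
  also have "\<dots> = D" unfolding Dsum_def sum_fmap_ind ..
  finally show ?thesis .
qed

lemma partb:
  assumes \<sigma>: "\<sigma> \<in> spins V"
  shows "(\<Sum>\<omega>\<in>Pow E. coupling V E J A B \<omega> \<sigma>) = muAB V E J A B \<sigma>"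
proof -
  define k where "k = Nsp / (ising_Z V E J)^2"
  have k: "k > 0" unfolding k_def using card_spins_pos[OF finV] ising_Z_pos[of E J] by simp
  have L: "(\<Sum>\<omega>\<in>Pow E. coupling V E J A B \<omega> \<sigma>) = Gfun V E J A B \<sigma> / D"
  proof -
    have "(\<Sum>\<omega>\<in>Pow E. coupling V E J A B \<omega> \<sigma>) = (\<Sum>\<omega>\<in>Pow E. g \<omega> * (if \<sigma> \<in> fmap V E \<omega> then 1 else 0) / D)"
      by (intro sum.cong) (auto simp: coupling_eq)
    also have "\<dots> = Gfun V E J A B \<sigma> / D" unfolding Gfun_def by (rule sum_divide_distrib[symmetric])
    finally show ?thesis .
  qed
  have R: "muAB V E J A B \<sigma> = (k * Gfun V E J A B \<sigma>) / (k * D)"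
  proof -
    have "(\<Sum>\<sigma>'\<in>spins V. muAB_weight V E J A B \<sigma>') = (\<Sum>\<sigma>'\<in>spins V. k * Gfun V E J A B \<sigma>')"
      unfolding k_def by (intro sum.cong) (auto simp: muAB_weight_eq)
    also have "\<dots> = k * D" by (simp add: sum_distrib_left[symmetric] sum_Gfun)
    finally show ?thesis unfolding muAB_def muAB_weight_eq[OF \<sigma>] k_def by simp
  qed
  show ?thesis unfolding L R using k by simp
qed

end


context pcfg begin

lemma FA_sub: "\<omega> \<in> FA V E X \<Longrightarrow> \<omega> \<subseteq> E" unfolding FA_def by auto

lemma D_nn: "D \<ge> 0"
  unfolding Dsum_def using g_nn by (intro sum_nonneg mult_nonneg_nonneg) auto

lemma sum_coupling_sigma:
  assumes "\<omega> \<subseteq> E"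
  shows "(\<Sum>\<sigma>\<in>spins V. coupling V E J A B \<omega> \<sigma>) = g \<omega> * real (card (fmap V E \<omega>)) / D"
proof -
  have "(\<Sum>\<sigma>\<in>spins V. coupling V E J A B \<omega> \<sigma>) = (\<Sum>\<sigma>\<in>spins V. if \<sigma> \<in> fmap V E \<omega> then g \<omega> / D else 0)"
    using coupling_eq[OF assms] by (intro sum.cong) auto
  also have "\<dots> = g \<omega> * real (card (fmap V E \<omega>)) / D" unfolding sum_fmap_ind by simp
  finally show ?thesis .
qed

lemma one_fmap: "\<omega> \<subseteq> E \<Longrightarrow> (\<lambda>_. 1) \<in> fmap V E \<omega>"
proof -
  assume oE: "\<omega> \<subseteq> E"
  have "\<omega> \<subseteq> agree_edges E (\<lambda>_. 1)"
  proof
    fix e assume "e \<in> \<omega>"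
    then have eE: "e \<in> E" using oE by auto
    then obtain u v where "e = {u, v}" using edge_pair by blast
    then show "e \<in> agree_edges E (\<lambda>_. 1)" unfolding agree_edges_def using eE by auto
  qed
  then show ?thesis unfolding fmap_iff using one_spins by simp
qed

lemma card_fmap_pos: "\<omega> \<subseteq> E \<Longrightarrow> card (fmap V E \<omega>) > 0"
proof -
  assume oE: "\<omega> \<subseteq> E"
  have "finite (fmap V E \<omega>)" using finite_spins[OF finV] unfolding fmap_def by auto
  then show ?thesis using one_fmap[OF oE] by (auto simp: card_gt_0_iff)
qed

lemma g_pos:
  assumes "\<omega> \<in> FA V E A" "\<omega> \<in> FA V E B"
  shows "g \<omega> > 0"
proof -
  have oE: "\<omega> \<subseteq> E" using FA_sub[OF assms(1)] .
  have fo: "finite \<omega>" using finite_Pow_sub[OF oE] .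
  obtain F1 where F1: "F1 \<subseteq> \<omega>" "bdry V F1 = A" using assms(1) unfolding FA_def by auto
  obtain F2 where F2: "F2 \<subseteq> \<omega>" "bdry V F2 = B" using assms(2) unfolding FA_def by auto
  define F where "F = symdiff F1 F2"
  have fin: "X \<subseteq> \<omega> \<Longrightarrow> finite X" for X using fo finite_subset by blast
  have Fin: "F \<in> {F\<in>Pow \<omega>. bdry V F = C}"
    unfolding F_def using F1 F2 bdry_symdiff[OF fin fin, of F1 F2] by (auto simp: symdiff_def)
  have Jp: "e \<in> \<omega> \<Longrightarrow> J e > 0" for e using Jpos oE by auto
  have tpos: "(\<Prod>e\<in>F. sinh (K2 e)) * (\<Prod>e\<in>\<omega> - F. cosh (K2 e) - 1) > 0"
  proof (intro mult_pos_pos prod_pos)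
    fix e assume "e \<in> F"
    then have "e \<in> \<omega>" using Fin by auto
    then show "0 < sinh (K2 e)" using Jp by simp
  next
    fix e assume "e \<in> \<omega> - F"
    then have "J e > 0" using Jp by auto
    then have c1: "cosh (K2 e) \<noteq> 1" by simp
    have "1 < cosh (K2 e)" by (metis c1 cosh_real_ge_1 order_le_neq_trans)
    then show "0 < cosh (K2 e) - 1" by simp
  qed
  have "(\<Prod>e\<in>F. sinh (K2 e)) * (\<Prod>e\<in>\<omega> - F. cosh (K2 e) - 1) \<le> Pf V K2 C \<omega>"
    unfolding Pf_def
  proof (rule member_le_sum[OF Fin])
    fix x assume "x \<in> {F\<in>Pow \<omega>. bdry V F = C} - {F}"
    then show "0 \<le> (\<Prod>e\<in>x. sinh (K2 e)) * (\<Prod>e\<in>\<omega> - x. cosh (K2 e) - 1)"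
      using Jp by (intro mult_nonneg_nonneg prod_nonneg) (auto simp: cosh_real_ge_1 less_imp_le)
  qed (use fo in simp)
  then show ?thesis unfolding gfun_def using assms(1) tpos by simp
qed

lemma partc:
  assumes "\<omega> \<in> FA V E A \<inter> FA V E B" "\<sigma> \<in> spins V"
  shows "coupling V E J A B \<omega> \<sigma> / (\<Sum>\<sigma>'\<in>spins V. coupling V E J A B \<omega> \<sigma>') = cluster_sign_law V \<omega> \<sigma>"
proof -
  have oE: "\<omega> \<subseteq> E" using assms FA_sub by blast
  have gp: "g \<omega> > 0" using g_pos assms by blast
  have cp: "real (card (fmap V E \<omega>)) > 0" using card_fmap_pos[OF oE] by simp
  have "g \<omega> * real (card (fmap V E \<omega>)) \<le> D"
    unfolding Dsum_def
  proof (rule member_le_sum)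
    show "\<omega> \<in> Pow E" using oE by simp
    show "finite (Pow E)" using finE by simp
    fix x assume "x \<in> Pow E - {\<omega>}"
    then show "0 \<le> g x * real (card (fmap V E x))" using g_nn by auto
  qed
  then have Dp: "D > 0" using gp cp by (meson mult_pos_pos order_less_le_trans)
  show ?thesis
    unfolding sum_coupling_sigma[OF oE] unfolding coupling_eq[OF oE] cluster_sign_law_eq[OF oE]
    using gp cp Dp by (simp add: field_simps)
qed

lemma partd:
  assumes "\<omega> \<in> Pow E"
  shows "(\<Sum>\<sigma>\<in>spins V. coupling V E J A B \<omega> \<sigma>) = drc_prob V E J A B \<omega>"
proof -
  have oE: "\<omega> \<subseteq> E" using assms by simp
  have Jnn: "\<And>e. e \<in> E \<Longrightarrow> J e \<ge> 0" using Jpos by (auto intro: less_imp_le)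
  define QA where "QA = Qc V E J A"
  define QB where "QB = Qc V E J B"
  have rpA: "rc_prob V E J A X = Pf V J A X / QA" if "X \<subseteq> E" for X
    unfolding QA_def using rc_prob_closed[OF order_refl Jnn, where C = A and \<omega> = X] that by simp
  have rpB: "rc_prob V E J B X = Pf V J B X / QB" if "X \<subseteq> E" for X
    unfolding QB_def using rc_prob_closed[OF order_refl Jnn, where C = B and \<omega> = X] that by simp
  have DDw: "(\<Sum>p\<in>{p\<in>Pow E \<times> Pow E. fst p \<union> snd p = \<omega>'}. Pf V J A (fst p) * Pf V J B (snd p))
      = g \<omega>' * real (card (fmap V E \<omega>')) / Nsp" if "\<omega>' \<subseteq> E" for \<omega>'
    using DD[OF that, of J A B] unfolding gfun_def by simp
  have drc: "drc_prob V E J A B \<omega> = (g \<omega> * real (card (fmap V E \<omega>)) / Nsp) / (QA * QB)"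
  proof -
    have "drc_prob V E J A B \<omega> = (\<Sum>p\<in>{p\<in>Pow E \<times> Pow E. fst p \<union> snd p = \<omega>}. Pf V J A (fst p) * Pf V J B (snd p) / (QA * QB))"
      unfolding drc_prob_def by (intro sum.cong) (auto simp: rpA rpB)
    also have "\<dots> = (\<Sum>p\<in>{p\<in>Pow E \<times> Pow E. fst p \<union> snd p = \<omega>}. Pf V J A (fst p) * Pf V J B (snd p)) / (QA * QB)"
      by (rule sum_divide_distrib[symmetric])
    finally show ?thesis using DDw[OF oE] by simp
  qed
  have QQ: "QA * QB = D / Nsp"
  proof -
    have "QA * QB = (\<Sum>\<omega>1\<in>Pow E. Pf V J A \<omega>1) * (\<Sum>\<omega>2\<in>Pow E. Pf V J B \<omega>2)"
      unfolding QA_def QB_def using sum_Pf[of E J A, OF order_refl] sum_Pf[of E J B, OF order_refl] by simp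
    also have "\<dots> = (\<Sum>p\<in>Pow E \<times> Pow E. Pf V J A (fst p) * Pf V J B (snd p))"
      by (simp add: sum_product sum.cartesian_product case_prod_unfold)
    also have "\<dots> = (\<Sum>\<omega>'\<in>Pow E. \<Sum>p\<in>{p. p \<in> Pow E \<times> Pow E \<and> fst p \<union> snd p = \<omega>'}. Pf V J A (fst p) * Pf V J B (snd p))"
      by (rule sum.group[symmetric]) (use finE in auto)
    also have "\<dots> = (\<Sum>\<omega>'\<in>Pow E. g \<omega>' * real (card (fmap V E \<omega>')) / Nsp)"
      by (intro sum.cong refl) (use DDw in auto)
    also have "\<dots> = D / Nsp" unfolding Dsum_def by (rule sum_divide_distrib[symmetric])
    finally show ?thesis .
  qed
  have Np: "Nsp > 0" using card_spins_pos[OF finV] by simp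
  show ?thesis unfolding sum_coupling_sigma[OF oE] drc QQ using Np
    by (cases "D = 0") (simp_all add: field_simps)
qed

lemma parte:
  assumes \<sigma>: "\<sigma> \<in> spins V" and mu: "muAB V E J A B \<sigma> \<noteq> 0" and o: "\<omega> \<in> Pow E"
  shows "coupling V E J A B \<omega> \<sigma> / (\<Sum>\<omega>'\<in>Pow E. coupling V E J A B \<omega>' \<sigma>)
       = rc_cond V E (S \<sigma>) K2 C (FA V E A) \<omega>"
proof -
  have oE: "\<omega> \<subseteq> E" using o by simp
  define G where "G = Gfun V E J A B \<sigma>"
  define Q where "Q = Qc V (S \<sigma>) K2 C"
  have sumc: "(\<Sum>\<omega>'\<in>Pow E. coupling V E J A B \<omega>' \<sigma>) = G / D"
  proof -
    have "(\<Sum>\<omega>'\<in>Pow E. coupling V E J A B \<omega>' \<sigma>) = (\<Sum>\<omega>'\<in>Pow E. g \<omega>' * (if \<sigma> \<in> fmap V E \<omega>' then 1 else 0) / D)"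
      by (intro sum.cong) (auto simp: coupling_eq)
    also have "\<dots> = G / D" unfolding G_def Gfun_def by (rule sum_divide_distrib[symmetric])
    finally show ?thesis .
  qed
  have GD: "G / D \<noteq> 0" using mu partb[OF \<sigma>] sumc by simp
  then have G0: "G \<noteq> 0" and D0: "D \<noteq> 0" by auto
  have Kp: "\<And>e. e \<in> S \<sigma> \<Longrightarrow> K2 e \<ge> 0" using agree_sub K2nnE by blast
  have rp: "rc_prob V (S \<sigma>) K2 C \<omega> = (if \<omega> \<subseteq> S \<sigma> then Pf V K2 C \<omega> else 0) / Q"
    unfolding Q_def by (rule rc_prob_closed[OF agree_sub Kp])
  have ev: "rc_event V E (S \<sigma>) K2 C (FA V E A) = G / Q" unfolding G_def Q_def by (rule W2[OF \<sigma>])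
  have Q0: "Q \<noteq> 0" using G0 ev
  proof -
    have "Q = 0 \<Longrightarrow> G = 0"
    proof -
      assume Q: "Q = 0"
      have "(\<Sum>\<omega>\<in>Pow (S \<sigma>). Pf V K2 C \<omega>) = 0" using sum_Pf[of "S \<sigma>" K2 C, OF agree_sub] Q unfolding Q_def by simp
      moreover have "finite (Pow (S \<sigma>))" using finite_Pow_sub[OF agree_sub] by simp
      moreover have "\<forall>\<omega>\<in>Pow (S \<sigma>). Pf V K2 C \<omega> \<ge> 0" using Pf2_nn agree_sub by blast
      ultimately have z: "\<forall>\<omega>\<in>Pow (S \<sigma>). Pf V K2 C \<omega> = 0" using sum_nonneg_eq_0_iff by blast
      show "G = 0" unfolding G_def Gfun_def
        by (intro sum.neutral) (auto simp: gfun_def fmap_iff z)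
    qed
    then show ?thesis using G0 by blast
  qed
  have num: "(if \<omega> \<in> FA V E A then rc_prob V (S \<sigma>) K2 C \<omega> else 0) = g \<omega> * (if \<sigma> \<in> fmap V E \<omega> then 1 else 0) / Q"
    unfolding rp using \<sigma> by (auto simp: gfun_def fmap_iff)
  show ?thesis
    unfolding rc_cond_def num ev sumc coupling_eq[OF oE] using G0 D0 Q0 by (simp add: field_simps)
qed

end

theorem proposition2p1:
  fixes V :: "'v set" and E :: "'v set set" and J :: "'v set \<Rightarrow> real" and A B :: "'v set"
  assumes "finite V"
    and "\<forall>e\<in>E. e \<subseteq> V \<and> card e = 2"
    and "\<forall>e\<in>E. J e > 0"
    and "A \<subseteq> V" and "B \<subseteq> V" and "even (card A)" and "even (card B)"
  shows "(\<forall>\<omega>\<in>Pow E. card (fmap V E \<omega>) = 2 ^ kappa V \<omega>)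
    \<and> (\<forall>\<sigma>\<in>spins V. (\<Sum>\<omega>\<in>Pow E. coupling V E J A B \<omega> \<sigma>) = muAB V E J A B \<sigma>)
    \<and> (\<forall>\<omega>\<in>FA V E A \<inter> FA V E B. \<forall>\<sigma>\<in>spins V.
          coupling V E J A B \<omega> \<sigma> / (\<Sum>\<sigma>'\<in>spins V. coupling V E J A B \<omega> \<sigma>')
          = cluster_sign_law V \<omega> \<sigma>)
    \<and> (\<forall>\<omega>\<in>Pow E. (\<Sum>\<sigma>\<in>spins V. coupling V E J A B \<omega> \<sigma>) = drc_prob V E J A B \<omega>)
    \<and> (\<forall>\<sigma>\<in>spins V. muAB V E J A B \<sigma> \<noteq> 0 \<longrightarrow> (\<forall>\<omega>\<in>Pow E.
          coupling V E J A B \<omega> \<sigma> / (\<Sum>\<omega>'\<in>Pow E. coupling V E J A B \<omega>' \<sigma>)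
          = rc_cond V E (agree_edges E \<sigma>) (\<lambda>e. 2 * J e) (symdiff A B) (FA V E A) \<omega>))"
proof -
  interpret pcfg V E J A B
    by (unfold_locales) (use assms in auto)
  show ?thesis
    using card_fmap partb partc partd parte by auto
qed


end
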